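(* For any policy $\pi$ and budget $\Lambda$: (a) there exist a target $f\in S(\mathcal{P},\nu,\rho,d,C)$ and fidelity approximations $(f_z)_{z\in Z}\in F(\mathrm{Asm},f,\lambda)$ such that $$r_\Lambda(\pi)\ge\sup\left\{r\in\left(0,\tfrac12\nu\rho\right] : \Lambda\le\frac1K\left(\frac{2r}{\nu\rho}\right)^{-d}\inf\bar\Phi^{-1}\!\left(\left[0,\tfrac{2r}{\rho}\right]\right)\right\};$$ (b) there exist a target $f\in S(\mathcal{P},\nu,\rho,d,C)$ and fidelity approximations $(f_z)_{z\in Z}\in F(\mathrm{Asm},f,\lambda)$ such that $$r_\Lambda(\pi)\ge\sup\left\{r\in\left(0,\tfrac14\nu\rho^6\right] : \Lambda\le\left(\frac{\log\frac{\nu}{4r}}{4\log\frac1\rho}-2\right)\inf\bar\Phi^{-1}\!\left(\left[0,\tfrac{\nu}{\rho}\left(\tfrac{4r}{\nu}\right)^{1/4}\right]\right)\right\},$$ where $\inf\bar\Phi^{-1}(I)=\inf\{c\ge1:\bar\Phi(c)\in I\}$.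
   Context: $\mathcal{X}$ has a hierarchical partitioning $\mathcal{P}=(\mathcal{P}_{h,i})_{h\ge0,0\le i\le K^h-1}$, $K\ge2$ ($\mathcal{P}_{0,0}=\mathcal{X}$; the children $\mathcal{P}_{h+1,Ki+l}$, $0\le l\le K-1$, partition $\mathcal{P}_{h,i}$). Fixed: $\nu>0$, $\rho\in(0,1)$, $d\in[0,\log K/\log(1/\rho)]$, $C\ge(K\rho^d)^{\lfloor\log3/\log(1/\rho)\rfloor}$, $C>1$. $S(\mathcal{P},\nu,\rho,d,C)$: set of $f:\mathcal{X}\to\mathbb{R}$ such that for one global maximizer $x^\star$ and all $h$, each $x$ in the depth-$h$ cell containing $x^\star$ has $f(x)\ge f(x^\star)-\nu\rho^h$, and for every $h$ at most $C\rho^{-dh}$ depth-$h$ cells $\mathcal{P}_{h,i}$ satisfy $\sup_{\mathcal{P}_{h,i}}f\ge f(x^\star)-3\nu\rho^h$. Multi-fidelity: $Z=[0,1]$; bias function $\zeta:Z\to[0,+\infty]$ with strictly increasing $g_z$ and $\sup_x|f(x)-g_z(f_z(x))|\le\zeta(z)$; cost function $\lambda$; for $c\ge1$ a fidelity $z_c$ with $\lambda(z_c)\le c$; cost-to-bias $\Phi(c)=\zeta(z_c)$. $\mathrm{Asm}$ is one of: (a) $\Phi(c)\le A/c^\alpha$; (b) $\Phi(c)\le Be^{-c^\beta/\sigma}$; (c) $\Phi(c)=0$ for $c\ge a$. $F(\mathrm{Asm},f,\lambda)$: families $(f_z)$ for which some bias function makes $\mathrm{Asm}$ hold. Here $\lambda$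 is a bijective cost function, $z_c=\lambda^{-1}(c)$, and $\bar\Phi$ is the bounding function of $\mathrm{Asm}$ ($A/c^\alpha$ for (a); $Be^{-c^\beta/\sigma}$ for (b); for (c), $0$ on $[a,\infty)$ and $+\infty$ on $[1,a)$), the bias being $\zeta(z)=\bar\Phi(\lambda(z))$, so that the cost-to-bias function equals $\bar\Phi$. A policy sequentially chooses (possibly at random) points $x_t$ and fidelities $z_t$, observes $f_{z_t}(x_t)$, as long as $\sum_{s\le t}\lambda(z_s)\le\Lambda$, and outputs $x_\Lambda$; $r_\Lambda(\pi)=\mathbb{E}[\max f-f(x_\Lambda)]$. *)

theory Defs
  imports "HOL-Analysis.Analysis" "HOL-Probability.Probability"
begin

text \<open>P h i is the cell P_{h,i}; only indices i < K^h are meaningful.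
  Cells of a partition are taken to be nonempty.\<close>
definition hier_partition :: "nat \<Rightarrow> (nat \<Rightarrow> nat \<Rightarrow> 'x set) \<Rightarrow> bool" where
  "hier_partition K P \<longleftrightarrow>
     P 0 0 = UNIV \<and>
     (\<forall>h i. i < K ^ h \<longrightarrow>
        P h i \<noteq> {} \<and>
        P h i = (\<Union>l<K. P (Suc h) (K * i + l)) \<and>
        (\<forall>l<K. \<forall>l'<K. l \<noteq> l' \<longrightarrow> P (Suc h) (K * i + l) \<inter> P (Suc h) (K * i + l') = {}))"

definition fun_class ::
  "nat \<Rightarrow> (nat \<Rightarrow> nat \<Rightarrow> 'x set) \<Rightarrow> real \<Rightarrow> real \<Rightarrow> real \<Rightarrow> real \<Rightarrow> ('x \<Rightarrow> real) set" where
  "fun_class K P \<nu> \<rho> d C = {f. \<exists>xs.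
      (\<forall>x. f x \<le> f xs) \<and>
      (\<forall>h i. i < K ^ h \<and> xs \<in> P h i \<longrightarrow> (\<forall>x \<in> P h i. f x \<ge> f xs - \<nu> * \<rho> ^ h)) \<and>
      (\<forall>h. real (card {i. i < K ^ h \<and> Sup (f ` P h i) \<ge> f xs - 3 * \<nu> * \<rho> ^ h})
              \<le> C * \<rho> powr (- d * real h))}"

datatype asm =
    AsmA real real        \<comment> \<open>(a): Phi(c) <= A / c^alpha, parameters A alpha\<close>
  | AsmB real real real   \<comment> \<open>(b): Phi(c) <= B exp(- c^beta / sigma), parameters B beta sigma\<close>
  | AsmC real             \<comment> \<open>(c): Phi(c) = 0 for c >= a, parameter a\<close>

definition asm_params_ok :: "asm \<Rightarrow> bool" where
  "asm_params_ok as = (case as of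
      AsmA A \<alpha> \<Rightarrow> A > 0 \<and> \<alpha> > 0
    | AsmB B \<beta> \<sigma> \<Rightarrow> B > 0 \<and> \<beta> > 0 \<and> \<sigma> > 0
    | AsmC a \<Rightarrow> True)"

definition asm_holds :: "asm \<Rightarrow> (real \<Rightarrow> ereal) \<Rightarrow> bool" where
  "asm_holds as \<Phi> = (case as of
      AsmA A \<alpha> \<Rightarrow> (\<forall>c \<ge> 1. \<Phi> c \<le> ereal (A / c powr \<alpha>))
    | AsmB B \<beta> \<sigma> \<Rightarrow> (\<forall>c \<ge> 1. \<Phi> c \<le> ereal (B * exp (- (c powr \<beta>) / \<sigma>)))
    | AsmC a \<Rightarrow> (\<forall>c \<ge> 1. c \<ge> a \<longrightarrow> \<Phi> c = 0))"

definition Phibar :: "asm \<Rightarrow> real \<Rightarrow> ereal" where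
  "Phibar as c = (case as of
      AsmA A \<alpha> \<Rightarrow> ereal (A / c powr \<alpha>)
    | AsmB B \<beta> \<sigma> \<Rightarrow> ereal (B * exp (- (c powr \<beta>) / \<sigma>))
    | AsmC a \<Rightarrow> (if c \<ge> a then 0 else \<infinity>))"

text \<open>inf barPhi^{-1}([0,t]) = inf {c >= 1. barPhi c in [0,t]}  (= +infinity if empty).\<close>
definition inv_Phibar :: "asm \<Rightarrow> real \<Rightarrow> ereal" where
  "inv_Phibar as t = Inf {ereal c | c. c \<ge> 1 \<and> Phibar as c \<in> {0 .. ereal t}}"

text \<open>Fidelity space Z = [0,1]; bijective cost lam : Z -> [1,oo), z_c = lam^{-1}(c).
  F(Asm, f, lam): families (f_z) admitting a bias function zeta : Z -> [0,+oo]
  and strictly increasing g_z with sup_x |f x - g_z (f_z x)| <= zeta z, such that the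
  cost-to-bias function Phi(c) = zeta(z_c) satisfies Asm.\<close>
definition fid_class :: "asm \<Rightarrow> ('x \<Rightarrow> real) \<Rightarrow> (real \<Rightarrow> real) \<Rightarrow> (real \<Rightarrow> 'x \<Rightarrow> real) set" where
  "fid_class as f lam = {fz. \<exists>\<zeta> :: real \<Rightarrow> ereal. \<exists>g :: real \<Rightarrow> real \<Rightarrow> real.
      (\<forall>z \<in> {0..1}. \<zeta> z \<ge> 0) \<and>
      (\<forall>z \<in> {0..1}. strict_mono (g z) \<and> (\<forall>x. ereal \<bar>f x - g z (fz z x)\<bar> \<le> \<zeta> z)) \<and>
      asm_holds as (\<lambda>c. \<zeta> (the_inv_into {0..1} lam c))}"

text \<open>A (randomized) policy: a random seed w drawn from a probability space M, a query rule
  Q w H giving the next point and fidelity from the history H of (point, fidelity, observation)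
  triples, and an output rule out w H.\<close>
type_synonym 'x hist = "('x \<times> real \<times> real) list"

definition hist_cost :: "(real \<Rightarrow> real) \<Rightarrow> 'x hist \<Rightarrow> real" where
  "hist_cost lam H = sum_list (map (\<lambda>(x, z, y). lam z) H)"

fun run_hist :: "(real \<Rightarrow> real) \<Rightarrow> real \<Rightarrow> (real \<Rightarrow> 'x \<Rightarrow> real) \<Rightarrow> ('x hist \<Rightarrow> 'x \<times> real)
                 \<Rightarrow> nat \<Rightarrow> 'x hist" where
  "run_hist lam \<Lambda> fz Q 0 = []"
| "run_hist lam \<Lambda> fz Q (Suc n) =
     (let H = run_hist lam \<Lambda> fz Q n; (x, z) = Q H in
      if hist_cost lam H + lam z \<le> \<Lambda> then H @ [(x, z, fz z x)] else H)"

text \<open>Since every cost is >= 1, at most floor(Lambda) queries are performed, so the history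
  after floor(Lambda)+1 rounds is the final one.\<close>
definition final_hist :: "(real \<Rightarrow> real) \<Rightarrow> real \<Rightarrow> (real \<Rightarrow> 'x \<Rightarrow> real) \<Rightarrow> ('x hist \<Rightarrow> 'x \<times> real)
                 \<Rightarrow> 'x hist" where
  "final_hist lam \<Lambda> fz Q = run_hist lam \<Lambda> fz Q (nat \<lfloor>\<Lambda>\<rfloor> + 1)"

text \<open>Outer expectation of a nonnegative function (coincides with the usual expectation
  for measurable functions).\<close>
definition outer_nn_integral :: "'w measure \<Rightarrow> ('w \<Rightarrow> ennreal) \<Rightarrow> ennreal" where
  "outer_nn_integral M g =
     (INF h \<in> {h \<in> borel_measurable M. \<forall>w \<in> space M. g w \<le> h w}. integral\<^sup>N M h)"

definition simple_regret ::
  "'w measure \<Rightarrow> ('w \<Rightarrow> 'x hist \<Rightarrow> 'x \<times> real) \<Rightarrow> ('w \<Rightarrow> 'x hist \<Rightarrow> 'x)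
   \<Rightarrow> (real \<Rightarrow> real) \<Rightarrow> real \<Rightarrow> ('x \<Rightarrow> real) \<Rightarrow> (real \<Rightarrow> 'x \<Rightarrow> real) \<Rightarrow> ennreal" where
  "simple_regret M Q out lam \<Lambda> f fz =
     outer_nn_integral M (\<lambda>w. ennreal (Sup (range f) - f (out w (final_hist lam \<Lambda> fz (Q w)))))"

end

theory Submission
  imports Defs
begin

locale hp =
  fixes K :: nat and P :: "nat \<Rightarrow> nat \<Rightarrow> 'x set"
  assumes K2: "K \<ge> 2" and part: "hier_partition K P"
begin

lemma Kpos: "K > 0" using K2 by simp

lemma P00: "P 0 0 = UNIV" using part unfolding hier_partition_def by blast

lemma P_ne: "i < K ^ h \<Longrightarrow> P h i \<noteq> {}"
  using part unfolding hier_partition_def by blast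

lemma P_union: "i < K ^ h \<Longrightarrow> P h i = (\<Union>l<K. P (Suc h) (K * i + l))"
  using part unfolding hier_partition_def by blast

lemma P_chdisj: "i < K ^ h \<Longrightarrow> l < K \<Longrightarrow> l' < K \<Longrightarrow> l \<noteq> l' \<Longrightarrow>
   P (Suc h) (K * i + l) \<inter> P (Suc h) (K * i + l') = {}"
  using part unfolding hier_partition_def by blast

lemma div_lt: "i < K ^ Suc h \<Longrightarrow> i div K < K ^ h"
  using Kpos by (simp add: less_mult_imp_div_less mult.commute)

lemma P_sub: assumes "i < K ^ Suc h" shows "P (Suc h) i \<subseteq> P h (i div K)"
proof -
  have e: "i = K * (i div K) + i mod K" by simp
  have "i mod K < K" using Kpos by simp
  then have "P (Suc h) (K * (i div K) + i mod K) \<subseteq> P h (i div K)"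
    using P_union[OF div_lt[OF assms]] by blast
  then show ?thesis using e by metis
qed

lemma P_disj: "i < K ^ h \<Longrightarrow> i' < K ^ h \<Longrightarrow> i \<noteq> i' \<Longrightarrow> P h i \<inter> P h i' = {}"
proof (induction h arbitrary: i i')
  case 0 then show ?case by simp
next
  case (Suc h)
  show ?case
  proof (cases "i div K = i' div K")
    case True
    have ne: "i mod K \<noteq> i' mod K" using True Suc.prems(3)
      by (metis div_mod_decomp)
    have e1: "i = K * (i div K) + i mod K" by simp
    have e2: "i' = K * (i div K) + i' mod K" using True by simp
    have "i mod K < K" "i' mod K < K" using Kpos by simp_all
    then have "P (Suc h) (K * (i div K) + i mod K) \<inter> P (Suc h) (K * (i div K) + i' mod K) = {}"
      using P_chdisj[OF div_lt[OF Suc.prems(1)], of "i mod K" "i' mod K"] ne by blast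
    then show ?thesis using e1 e2 by metis
  next
    case False
    have "i div K < K ^ h" "i' div K < K ^ h" using div_lt Suc.prems by blast+
    then have "P h (i div K) \<inter> P h (i' div K) = {}"
      using Suc.IH False by blast
    then show ?thesis using P_sub[OF Suc.prems(1)] P_sub[OF Suc.prems(2)] by blast
  qed
qed

lemma P_cover: "\<exists>i < K ^ h. x \<in> P h i"
proof (induction h)
  case 0 then show ?case using P00 by simp
next
  case (Suc h)
  then obtain i where i: "i < K ^ h" "x \<in> P h i" by blast
  then obtain l where l: "l < K" "x \<in> P (Suc h) (K * i + l)" using P_union by blast
  have "K * i + l < K ^ Suc h"
  proof -
    have "K * i + l < K * i + K" using l by simp
    also have "\<dots> = K * (i + 1)" by simp
    also have "\<dots> \<le> K * K ^ h" using i by (intro mult_left_mono) auto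
    finally show ?thesis by simp
  qed
  then show ?case using l by blast
qed

definition idx :: "nat \<Rightarrow> 'x \<Rightarrow> nat" where
  "idx h x = (THE i. i < K ^ h \<and> x \<in> P h i)"

lemma idx_unique: "i < K ^ h \<Longrightarrow> x \<in> P h i \<Longrightarrow> idx h x = i"
  unfolding idx_def
  by (rule the_equality) (use P_disj in blast)+

lemma idx_props: "idx h x < K ^ h \<and> x \<in> P h (idx h x)"
  using P_cover[of h x] idx_unique by metis

lemma idx_lt: "idx h x < K ^ h" using idx_props by blast
lemma idx_mem: "x \<in> P h (idx h x)" using idx_props by blast

lemma idx_iff: "i < K ^ h \<Longrightarrow> x \<in> P h i \<longleftrightarrow> idx h x = i"
  using idx_unique idx_mem by metis

lemma idx_Suc: "idx h x = idx (Suc h) x div K"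
proof -
  have "x \<in> P h (idx (Suc h) x div K)" using P_sub[OF idx_lt] idx_mem by blast
  then show ?thesis using idx_unique div_lt[OF idx_lt] by metis
qed

lemma idx_add: "idx h x = idx (h + k) x div K ^ k"
proof (induction k)
  case 0 show ?case by simp
next
  case (Suc k)
  have "idx (h + k) x = idx (h + Suc k) x div K" using idx_Suc[of "h+k" x] by simp
  then have "idx h x = idx (h + Suc k) x div K div K ^ k" using Suc by simp
  also have "\<dots> = idx (h + Suc k) x div K ^ Suc k" by (simp add: div_mult2_eq)
  finally show ?case .
qed

lemma idx_0: "idx 0 x = 0" using idx_lt[of 0 x] by simp

lemma idx_le: "g \<le> h \<Longrightarrow> idx g x = idx h x div K ^ (h - g)"
  using idx_add[of g x "h - g"] by simp

lemma same_mono: "g \<le> h \<Longrightarrow> idx h x = idx h y \<Longrightarrow> idx g x = idx g y"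
  using idx_le by metis

end

definition vl :: "real \<Rightarrow> real \<Rightarrow> nat set \<Rightarrow> real" where
  "vl \<nu> \<rho> R = (if \<exists>g. g \<notin> R then - \<nu> * \<rho> ^ (LEAST e. Suc e \<notin> R) else 0)"

definition dcl :: "nat set \<Rightarrow> bool" where
  "dcl R \<longleftrightarrow> (\<forall>g h. h \<le> g \<longrightarrow> g \<in> R \<longrightarrow> h \<in> R)"

lemma vl_ge: assumes "dcl R" "g \<in> R" "\<nu> > 0" "0 < \<rho>" "\<rho> \<le> 1"
  shows "vl \<nu> \<rho> R \<ge> - \<nu> * \<rho> ^ g"
proof (cases "\<exists>g. g \<notin> R")
  case True
  then obtain g' where g': "g' \<notin> R" by blast
  then have "Suc g' \<notin> R" using assms(1) unfolding dcl_def by (meson le_SucI order_refl)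
  then have ex: "Suc (LEAST e. Suc e \<notin> R) \<notin> R" by (rule LeastI)
  have "g \<le> (LEAST e. Suc e \<notin> R)"
  proof (rule ccontr)
    assume "\<not> ?thesis"
    then have "Suc (LEAST e. Suc e \<notin> R) \<le> g" by simp
    then show False using assms(1,2) ex unfolding dcl_def by blast
  qed
  then have "\<rho> ^ (LEAST e. Suc e \<notin> R) \<le> \<rho> ^ g" using assms by (simp add: power_decreasing)
  then show ?thesis using True assms(3) unfolding vl_def by simp
next
  case False
  then show ?thesis using assms unfolding vl_def by simp
qed

lemma vl_le: assumes "Suc g \<notin> R" "\<nu> > 0" "0 < \<rho>" "\<rho> \<le> 1"
  shows "vl \<nu> \<rho> R \<le> - \<nu> * \<rho> ^ g"
proof -
  have "(LEAST e. Suc e \<notin> R) \<le> g" using assms(1) by (rule Least_le)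
  then have "\<rho> ^ g \<le> \<rho> ^ (LEAST e. Suc e \<notin> R)" using assms by (simp add: power_decreasing)
  then show ?thesis using assms unfolding vl_def by auto
qed

lemma vl_nonpos: assumes "\<nu> > 0" "0 < \<rho>" shows "vl \<nu> \<rho> R \<le> 0"
  using assms unfolding vl_def by auto

lemma vl_UNIV: "vl \<nu> \<rho> UNIV = 0" unfolding vl_def by simp

lemma vl_ge_nu: assumes "\<nu> > 0" "0 < \<rho>" "\<rho> \<le> 1" shows "vl \<nu> \<rho> R \<ge> - \<nu>"
  using assms unfolding vl_def by (auto simp: power_le_one)

context hp
begin

definition RT :: "nat \<Rightarrow> nat \<Rightarrow> 'x \<Rightarrow> nat set" where
  "RT j U x = {g. g \<le> j \<and> idx g x * K ^ (j - g) < U}"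

definition RC :: "nat \<Rightarrow> nat \<Rightarrow> 'x \<Rightarrow> 'x \<Rightarrow> nat set" where
  "RC j U xs x = {g. idx g x = idx g xs} \<union> RT j U x"

lemma RT_down: assumes hg: "h \<le> g" and gR: "g \<in> RT j U x" shows "h \<in> RT j U x"
proof -
  have gj: "g \<le> j" and lt: "idx g x * K ^ (j - g) < U" using gR unfolding RT_def by auto
  have "idx h x = idx g x div K ^ (g - h)" using idx_le hg by blast
  then have "idx h x * K ^ (g - h) \<le> idx g x" by simp
  then have "idx h x * K ^ (g - h) * K ^ (j - g) \<le> idx g x * K ^ (j - g)" by simp
  moreover have "(g - h) + (j - g) = j - h" using hg gj by simp
  then have "K ^ (g - h) * K ^ (j - g) = K ^ (j - h)" by (metis power_add)
  ultimately have "idx h x * K ^ (j - h) \<le> idx g x * K ^ (j - g)" by (simp add: mult.assoc)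
  then show ?thesis using lt hg gj unfolding RT_def by simp
qed

lemma dcl_RT: "dcl (RT j U x)"
  unfolding dcl_def using RT_down by blast

lemma dcl_RC: "dcl (RC j U xs x)"
  using dcl_RT[of j U x] same_mono unfolding dcl_def RC_def by blast

end

locale hpc = hp K P for K and P :: "nat \<Rightarrow> nat \<Rightarrow> 'x set" +
  fixes \<nu> \<rho> d C :: real
  assumes nu: "\<nu> > 0" and rho0: "0 < \<rho>" and rho1: "\<rho> < 1"
    and d0: "0 \<le> d" and d1: "d \<le> ln (real K) / ln (1 / \<rho>)"
    and Cge: "C \<ge> (real K * \<rho> powr d) ^ nat \<lfloor>ln 3 / ln (1 / \<rho>)\<rfloor>" and C1: "C > 1"
begin

definition n0 :: nat where "n0 = nat \<lfloor>ln 3 / ln (1 / \<rho>)\<rfloor>"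

lemma lnr: "ln (1 / \<rho>) > 0" using rho0 rho1 by simp

lemma rd_le_K: "\<rho> powr (- d) \<le> real K"
proof -
  have "\<rho> powr (- d) = exp (d * ln (1 / \<rho>))" using rho0 by (simp add: powr_def ln_div)
  also have "d * ln (1 / \<rho>) \<le> ln (real K)" using d1 lnr by (simp add: pos_le_divide_eq)
  then have "exp (d * ln (1 / \<rho>)) \<le> exp (ln (real K))" by simp
  also have "exp (ln (real K)) = real K" using Kpos by simp
  finally show ?thesis .
qed

lemma Krd: "1 \<le> real K * \<rho> powr d"
proof -
  have "\<rho> powr d * \<rho> powr (- d) = 1" using rho0 by (simp add: powr_add[symmetric])
  then have "1 \<le> \<rho> powr d * real K" using rd_le_K
    by (metis mult_left_mono powr_ge_zero)
  then show ?thesis by (simp add: mult.commute)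
qed

lemma gap: "3 * \<rho> ^ Suc n0 < 1"
proof -
  have "real n0 > ln 3 / ln (1 / \<rho>) - 1"
  proof -
    have "ln 3 / ln (1 / \<rho>) \<ge> 0" using lnr by simp
    then show ?thesis unfolding n0_def by linarith
  qed
  then have "real (Suc n0) * ln (1 / \<rho>) > ln 3" using lnr by (simp add: field_simps)
  moreover have "ln (\<rho> ^ Suc n0) = - (real (Suc n0) * ln (1 / \<rho>))"
    using rho0 by (simp only: ln_realpow ln_div) simp
  ultimately have "ln (\<rho> ^ Suc n0) < - ln 3" by linarith
  then have "\<rho> ^ Suc n0 < exp (- ln 3)" using rho0 by (metis exp_less_mono exp_ln zero_less_power)
  also have "exp (- ln 3) = (1::real) / 3" by (simp add: exp_minus)
  finally show ?thesis by simp
qed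

lemma rp_le1: "0 \<le> e \<Longrightarrow> \<rho> powr e \<le> 1"
  using rho0 rho1 by (cases "e = 0") (auto simp: less_eq_real_def powr01_less_one)

lemma rpow: "\<rho> powr (- d * real h) * (\<rho> powr d) ^ h = 1"
  using rho0 by (simp add: powr_power powr_add[symmetric] mult.commute)

lemma Kh_le: assumes "h \<le> n0" shows "real (K ^ h) \<le> C * \<rho> powr (- d * real h)"
proof -
  have "(real K * \<rho> powr d) ^ h \<le> (real K * \<rho> powr d) ^ n0"
    using Krd assms by (simp add: power_increasing)
  also have "\<dots> \<le> C" using Cge unfolding n0_def .
  finally have "(real K * \<rho> powr d) ^ h * \<rho> powr (- d * real h) \<le> C * \<rho> powr (- d * real h)"
    by (simp add: mult_right_mono)
  moreover have "(real K * \<rho> powr d) ^ h * \<rho> powr (- d * real h) = real (K ^ h)"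
    using rpow[of h] by (simp add: power_mult_distrib mult.assoc mult.commute)
  ultimately show ?thesis by simp
qed

lemma KnG: "real (K ^ n0) * \<rho> powr (- d * real G) \<le> C * \<rho> powr (- d * real (G + n0))"
proof -
  have e: "\<rho> powr (- d * real (G + n0)) = \<rho> powr (- d * real G) * \<rho> powr (- d * real n0)"
    by (simp add: powr_add[symmetric] algebra_simps)
  have "(real K * \<rho> powr d) ^ n0 * \<rho> powr (- d * real n0) = real (K ^ n0)"
    using rpow[of n0] by (simp add: power_mult_distrib mult.assoc mult.commute)
  then have "real (K ^ n0) \<le> C * \<rho> powr (- d * real n0)"
    using Cge unfolding n0_def[symmetric] by (metis mult_right_mono powr_ge_zero)
  then have "real (K ^ n0) * \<rho> powr (- d * real G) \<le> C * \<rho> powr (- d * real n0) * \<rho> powr (- d * real G)"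
    by (simp add: mult_right_mono)
  then show ?thesis using e by (simp add: mult_ac)
qed


lemma RC_self: "RC j U xs xs = UNIV" unfolding RC_def by auto

lemma f_le: "vl \<nu> \<rho> R \<le> 0" using vl_nonpos nu rho0 by blast

lemma count_bound:
  assumes Ub: "\<And>g. g \<le> j \<Longrightarrow> U \<le> K ^ (j - g) * nat \<lfloor>\<rho> powr (- d * real g)\<rfloor>"
    and xs: "idx j xs < U"
  shows "real (card {i. i < K ^ h \<and> Sup ((\<lambda>x. vl \<nu> \<rho> (RC j U xs x)) ` P h i) \<ge> 0 - 3 * \<nu> * \<rho> ^ h})
          \<le> C * \<rho> powr (- d * real h)"
proof -
  define f where "f = (\<lambda>x. vl \<nu> \<rho> (RC j U xs x))"
  define S where "S = {i. i < K ^ h \<and> Sup (f ` P h i) \<ge> 0 - 3 * \<nu> * \<rho> ^ h}"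
  have finS: "finite S" unfolding S_def by simp
  show ?thesis
  proof (cases "h \<le> n0")
    case True
    have "card S \<le> card {..<K ^ h}" unfolding S_def by (rule card_mono) auto
    then have "real (card S) \<le> real (K ^ h)" by (simp only: of_nat_le_iff card_lessThan)
    then have "real (card S) \<le> C * \<rho> powr (- d * real h)" using Kh_le[OF True] by linarith
    then show ?thesis unfolding S_def f_def .
  next
    case False
    define G where "G = h - n0"
    have hG: "h = G + n0" using False unfolding G_def by simp
    have G1: "G \<ge> 1" using False unfolding G_def by simp
    have sub: "S \<subseteq> {i. i < K ^ h \<and> (i div K ^ n0 = idx G xs \<or> (G \<le> j \<and> (i div K ^ n0) * K ^ (j - G) < U))}"
    proof
      fix i assume iS: "i \<in> S"
      then have ih: "i < K ^ h" and sup: "Sup (f ` P h i) \<ge> 0 - 3 * \<nu> * \<rho> ^ h" unfolding S_def by auto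
      have "\<exists>x \<in> P h i. G \<in> RC j U xs x"
      proof (rule ccontr)
        assume "\<not> ?thesis"
        then have "\<forall>x \<in> P h i. Suc (G - 1) \<notin> RC j U xs x" using G1 by simp
        then have le: "\<forall>x \<in> P h i. f x \<le> - \<nu> * \<rho> ^ (G - 1)"
          unfolding f_def using vl_le nu rho0 rho1 by (simp add: less_imp_le)
        have "Sup (f ` P h i) \<le> - \<nu> * \<rho> ^ (G - 1)"
          using P_ne[OF ih] le by (intro cSup_least) auto
        moreover have "- \<nu> * \<rho> ^ (G - 1) < - 3 * \<nu> * \<rho> ^ h"
        proof -
          have "\<rho> ^ h = \<rho> ^ (G - 1) * \<rho> ^ Suc n0" using hG G1
            by (metis Suc_diff_1 add_Suc_shift less_le_trans power_add zero_less_one)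
          then have "3 * \<rho> ^ h = \<rho> ^ (G - 1) * (3 * \<rho> ^ Suc n0)" by simp
          also have "\<dots> < \<rho> ^ (G - 1) * 1" using gap rho0 by (intro mult_strict_left_mono) auto
          finally have "3 * \<rho> ^ h < \<rho> ^ (G - 1)" by simp
          then show ?thesis using nu by (simp add: mult_strict_left_mono)
        qed
        ultimately show False using sup by simp
      qed
      then obtain x where x: "x \<in> P h i" "G \<in> RC j U xs x" by blast
      have "idx h x = i" using idx_unique ih x(1) by blast
      then have ig: "idx G x = i div K ^ n0" using idx_add[of G x n0] hG by simp
      show "i \<in> {i. i < K ^ h \<and> (i div K ^ n0 = idx G xs \<or> (G \<le> j \<and> (i div K ^ n0) * K ^ (j - G) < U))}"
        using x(2) ih ig unfolding RC_def RT_def by auto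
    qed
    show ?thesis
    proof (cases "G \<le> j")
      case True
      define F where "F = nat \<lfloor>\<rho> powr (- d * real G)\<rfloor>"
      have "S \<subseteq> {..< F * K ^ n0}"
      proof
        fix i assume "i \<in> S"
        then have i: "i div K ^ n0 = idx G xs \<or> (i div K ^ n0) * K ^ (j - G) < U" using sub True by auto
        have "idx G xs * K ^ (j - G) \<le> idx j xs" using idx_le[OF True, of xs] by simp
        then have "(i div K ^ n0) * K ^ (j - G) < U" using i xs by auto
        also have "U \<le> K ^ (j - G) * F" using Ub[OF True] unfolding F_def .
        finally have "i div K ^ n0 < F" by (simp add: mult.commute)
        then show "i \<in> {..< F * K ^ n0}" using Kpos
          by (simp add: div_less_iff_less_mult)
      qed
      then have "card S \<le> F * K ^ n0" by (metis card_lessThan card_mono finite_lessThan)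
      then have "real (card S) \<le> real F * real (K ^ n0)" by (metis of_nat_le_iff of_nat_mult)
      also have "real F \<le> \<rho> powr (- d * real G)" unfolding F_def
        by (simp add: of_nat_floor)
      then have "real F * real (K ^ n0) \<le> \<rho> powr (- d * real G) * real (K ^ n0)"
        by (simp add: mult_right_mono)
      also have "\<dots> \<le> C * \<rho> powr (- d * real h)" using KnG[of G] hG by (simp add: mult.commute)
      finally show ?thesis unfolding S_def f_def .
    next
      case False
      have "S \<subseteq> {i. i div K ^ n0 = idx G xs}" using sub False by auto
      also have "\<dots> \<subseteq> {idx G xs * K ^ n0 ..< idx G xs * K ^ n0 + K ^ n0}"
      proof
        fix i assume "i \<in> {i. i div K ^ n0 = idx G xs}"
        then have "i = idx G xs * K ^ n0 + i mod K ^ n0" by (metis mem_Collect_eq div_mult_mod_eq)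
        moreover have "i mod K ^ n0 < K ^ n0" using Kpos by simp
        ultimately show "i \<in> {idx G xs * K ^ n0 ..< idx G xs * K ^ n0 + K ^ n0}"
          by (metis atLeastLessThan_iff le_add1 nat_add_left_cancel_less)
      qed
      finally have "card S \<le> K ^ n0" by (metis card_atLeastLessThan card_mono diff_add_inverse finite_atLeastLessThan)
      then have "real (card S) \<le> real (K ^ n0) * 1" by simp
      also have "\<dots> \<le> real (K ^ n0) * \<rho> powr (- d * real G)"
      proof (intro mult_left_mono)
        have "\<rho> powr (d * real G) \<le> 1" using rp_le1 d0 by simp
        then show "1 \<le> \<rho> powr (- d * real G)" using rho0
          by (simp add: powr_minus_divide)
      qed simp
      also have "\<dots> \<le> C * \<rho> powr (- d * real h)" using KnG[of G] hG by simp
      finally show ?thesis unfolding S_def f_def .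
    qed
  qed
qed


lemma class_mem:
  assumes Ub: "\<And>g. g \<le> j \<Longrightarrow> U \<le> K ^ (j - g) * nat \<lfloor>\<rho> powr (- d * real g)\<rfloor>"
    and xs: "idx j xs < U"
  shows "(\<lambda>x. vl \<nu> \<rho> (RC j U xs x)) \<in> fun_class K P \<nu> \<rho> d C"
proof -
  define f where "f = (\<lambda>x. vl \<nu> \<rho> (RC j U xs x))"
  have fxs: "f xs = 0" unfolding f_def RC_self vl_UNIV ..
  have A: "\<forall>x. f x \<le> f xs" using f_le fxs unfolding f_def by simp
  have B: "\<forall>h i. i < K ^ h \<and> xs \<in> P h i \<longrightarrow> (\<forall>x \<in> P h i. f x \<ge> f xs - \<nu> * \<rho> ^ h)"
  proof (intro allI impI ballI)
    fix h i x assume hi: "i < K ^ h \<and> xs \<in> P h i" and x: "x \<in> P h i"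
    then have "idx h x = idx h xs" using idx_unique by metis
    then have "h \<in> RC j U xs x" unfolding RC_def by simp
    then have "f x \<ge> - \<nu> * \<rho> ^ h" unfolding f_def using vl_ge dcl_RC nu rho0 rho1 by (simp add: less_imp_le)
    then show "f x \<ge> f xs - \<nu> * \<rho> ^ h" using fxs by simp
  qed
  have Cc: "\<forall>h. real (card {i. i < K ^ h \<and> Sup (f ` P h i) \<ge> f xs - 3 * \<nu> * \<rho> ^ h})
              \<le> C * \<rho> powr (- d * real h)"
    using count_bound[OF Ub xs] fxs unfolding f_def by simp
  show ?thesis unfolding fun_class_def f_def[symmetric] using A B Cc by blast
qed

end

lemma Phibar_nonneg: assumes "asm_params_ok as" "c \<ge> 1" shows "Phibar as c \<ge> 0"
  using assms unfolding asm_params_ok_def Phibar_def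
  by (cases as) auto

lemma inv_ge1: "inv_Phibar as t \<ge> 1"
  unfolding inv_Phibar_def by (rule Inf_greatest) auto

lemma hide_gt: assumes "asm_params_ok as" "c \<ge> 1" "ereal c < inv_Phibar as t"
  shows "Phibar as c > ereal t"
proof (rule ccontr)
  assume "\<not> ?thesis"
  then have "Phibar as c \<in> {0 .. ereal t}" using Phibar_nonneg[OF assms(1,2)] by auto
  then have "ereal c \<in> {ereal c | c. c \<ge> 1 \<and> Phibar as c \<in> {0 .. ereal t}}" using assms(2) by blast
  then have "inv_Phibar as t \<le> ereal c" unfolding inv_Phibar_def by (rule Inf_lower)
  then show False using assms(3) by simp
qed

lemma asm_holds_Phibar: "asm_holds as (Phibar as)"
  unfolding asm_holds_def Phibar_def by (cases as) auto

lemma fid_mem: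
  assumes as: "asm_params_ok as" and lam: "bij_betw lam {0..1} {1..}"
    and hide: "\<And>x. \<bar>f x - g x\<bar> \<le> t"
  shows "(\<lambda>z x. if ereal (lam z) < inv_Phibar as t then g x else f x) \<in> fid_class as f lam"
proof -
  define \<zeta> where "\<zeta> = (\<lambda>z. Phibar as (lam z))"
  have lam1: "\<And>z. z \<in> {0..1} \<Longrightarrow> lam z \<ge> 1" using lam unfolding bij_betw_def by auto
  have A: "\<forall>z \<in> {0..1}. \<zeta> z \<ge> 0" using Phibar_nonneg[OF as] lam1 unfolding \<zeta>_def by blast
  have B: "\<forall>z \<in> {0..1}. strict_mono ((\<lambda>z. id) z) \<and>
      (\<forall>x. ereal \<bar>f x - (\<lambda>z. id) z ((\<lambda>z x. if ereal (lam z) < inv_Phibar as t then g x else f x) z x)\<bar> \<le> \<zeta> z)"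
  proof (intro ballI conjI allI)
    fix z :: real and x assume z: "z \<in> {0..1}"
    show "strict_mono ((\<lambda>z. id) z)" by (simp add: strict_mono_def)
    show "ereal \<bar>f x - (\<lambda>z. id) z ((\<lambda>z x. if ereal (lam z) < inv_Phibar as t then g x else f x) z x)\<bar> \<le> \<zeta> z"
    proof (cases "ereal (lam z) < inv_Phibar as t")
      case True
      then have "Phibar as (lam z) > ereal t" using hide_gt[OF as lam1[OF z]] by blast
      moreover have "ereal \<bar>f x - g x\<bar> \<le> ereal t" using hide by simp
      ultimately have "ereal \<bar>f x - g x\<bar> \<le> Phibar as (lam z)" by (meson less_imp_le order_trans)
      then show ?thesis using True unfolding \<zeta>_def by simp
    next
      case False
      then show ?thesis using A z by (simp add: zero_ereal_def[symmetric])
    qed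
  qed
  have C: "asm_holds as (\<lambda>c. \<zeta> (the_inv_into {0..1} lam c))"
  proof -
    have "\<And>c. c \<ge> 1 \<Longrightarrow> \<zeta> (the_inv_into {0..1} lam c) = Phibar as c"
      unfolding \<zeta>_def using f_the_inv_into_f_bij_betw[OF lam] by simp
    then show ?thesis using asm_holds_Phibar[of as] unfolding asm_holds_def
      by (cases as) auto
  qed
  show ?thesis unfolding fid_class_def mem_Collect_eq
    by (intro exI[of _ \<zeta>] exI[of _ "\<lambda>z. id"] conjI A B C)
qed

lemma fid_mem_triv:
  assumes as: "asm_params_ok as" and lam: "bij_betw lam {0..1} {1..}"
  shows "(\<lambda>z x. f x) \<in> fid_class as f lam"
  using fid_mem[OF as lam, of f f 0] by simp

lemma run_Suc_cases:
  "run_hist lam \<Lambda> fz Q (Suc n) = run_hist lam \<Lambda> fz Q n \<or>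
   (hist_cost lam (run_hist lam \<Lambda> fz Q n) + lam (snd (Q (run_hist lam \<Lambda> fz Q n))) \<le> \<Lambda> \<and>
    run_hist lam \<Lambda> fz Q (Suc n) = run_hist lam \<Lambda> fz Q n @
      [(fst (Q (run_hist lam \<Lambda> fz Q n)), snd (Q (run_hist lam \<Lambda> fz Q n)),
        fz (snd (Q (run_hist lam \<Lambda> fz Q n))) (fst (Q (run_hist lam \<Lambda> fz Q n))))])"
  by (simp add: Let_def split: prod.split)

lemma hist_cost_append: "hist_cost lam (H @ H') = hist_cost lam H + hist_cost lam H'"
  unfolding hist_cost_def by simp

lemma hist_cost_single: "hist_cost lam [(x, z, y)] = lam z"
  unfolding hist_cost_def by simp

lemma run_cost: "run_hist lam \<Lambda> fz Q n = [] \<or> hist_cost lam (run_hist lam \<Lambda> fz Q n) \<le> \<Lambda>"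
proof (induction n)
  case 0 then show ?case by simp
next
  case (Suc n)
  from run_Suc_cases[of lam \<Lambda> fz Q n] show ?case
  proof
    assume "run_hist lam \<Lambda> fz Q (Suc n) = run_hist lam \<Lambda> fz Q n"
    then show ?case using Suc by simp
  next
    assume a: "hist_cost lam (run_hist lam \<Lambda> fz Q n) + lam (snd (Q (run_hist lam \<Lambda> fz Q n))) \<le> \<Lambda> \<and>
    run_hist lam \<Lambda> fz Q (Suc n) = run_hist lam \<Lambda> fz Q n @
      [(fst (Q (run_hist lam \<Lambda> fz Q n)), snd (Q (run_hist lam \<Lambda> fz Q n)),
        fz (snd (Q (run_hist lam \<Lambda> fz Q n))) (fst (Q (run_hist lam \<Lambda> fz Q n))))]"
    then have "hist_cost lam (run_hist lam \<Lambda> fz Q (Suc n)) \<le> \<Lambda>"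
      by (simp only: hist_cost_append hist_cost_single)
    then show ?case by simp
  qed
qed

lemma run_prefix_Suc: "\<exists>ys. run_hist lam \<Lambda> fz Q (Suc n) = run_hist lam \<Lambda> fz Q n @ ys"
  using run_Suc_cases[of lam \<Lambda> fz Q n] by (metis append_Nil2)

lemma run_prefix: "m \<le> n \<Longrightarrow> \<exists>ys. run_hist lam \<Lambda> fz Q n = run_hist lam \<Lambda> fz Q m @ ys"
proof (induction n)
  case 0 then show ?case by simp
next
  case (Suc n)
  show ?case
  proof (cases "m = Suc n")
    case True then show ?thesis by simp
  next
    case False
    then obtain ys where "run_hist lam \<Lambda> fz Q n = run_hist lam \<Lambda> fz Q m @ ys" using Suc by auto
    moreover obtain zs where "run_hist lam \<Lambda> fz Q (Suc n) = run_hist lam \<Lambda> fz Q n @ zs"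
      using run_prefix_Suc by blast
    ultimately show ?thesis by auto
  qed
qed

lemma run_set_mono: "m \<le> n \<Longrightarrow> set (run_hist lam \<Lambda> fz Q m) \<subseteq> set (run_hist lam \<Lambda> fz Q n)"
proof -
  assume "m \<le> n"
  then obtain ys where "run_hist lam \<Lambda> fz Q n = run_hist lam \<Lambda> fz Q m @ ys" using run_prefix by blast
  then show ?thesis by simp
qed

lemma run_entries: "e \<in> set (run_hist lam \<Lambda> fz Q n) \<Longrightarrow>
   (\<exists>H. Q H = (fst e, fst (snd e))) \<and> snd (snd e) = fz (fst (snd e)) (fst e)"
proof (induction n)
  case 0 then show ?case by simp
next
  case (Suc n)
  then show ?case using run_Suc_cases[of lam \<Lambda> fz Q n] by (auto simp del: run_hist.simps; blast)
qed

lemma run_cmp: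
  assumes "\<And>x z y. (x, z, y) \<in> set (run_hist lam \<Lambda> fz1 Q n) \<Longrightarrow> fz2 z x = fz1 z x"
  shows "run_hist lam \<Lambda> fz2 Q n = run_hist lam \<Lambda> fz1 Q n"
  using assms
proof (induction n)
  case 0 then show ?case by simp
next
  case (Suc n)
  have sub: "set (run_hist lam \<Lambda> fz1 Q n) \<subseteq> set (run_hist lam \<Lambda> fz1 Q (Suc n))"
    by (rule run_set_mono) simp
  then have IH: "run_hist lam \<Lambda> fz2 Q n = run_hist lam \<Lambda> fz1 Q n" using Suc by blast
  obtain x z where xz: "Q (run_hist lam \<Lambda> fz1 Q n) = (x, z)" by fastforce
  show ?case
  proof (cases "hist_cost lam (run_hist lam \<Lambda> fz1 Q n) + lam z \<le> \<Lambda>")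
    case True
    then have "(x, z, fz1 z x) \<in> set (run_hist lam \<Lambda> fz1 Q (Suc n))" using xz by simp
    then have "fz2 z x = fz1 z x" using Suc.prems by blast
    then show ?thesis using IH xz True by simp
  next
    case False
    then show ?thesis using IH xz by simp
  qed
qed

lemma count_cost:
  assumes "\<forall>e \<in> set H. lam (fst (snd e)) \<ge> 0"
  shows "real (length (filter (\<lambda>e. lam (fst (snd e)) \<ge> c) H)) * c \<le> hist_cost lam H \<or> c < 0"
  using assms
proof (induction H)
  case Nil then show ?case by (simp add: hist_cost_def)
next
  case (Cons e H)
  have hc: "hist_cost lam (e # H) = lam (fst (snd e)) + hist_cost lam H"
    unfolding hist_cost_def by (cases e) auto
  show ?case using Cons hc by (auto simp: algebra_simps)
qed

lemma count_high:
  assumes H: "H = [] \<or> hist_cost lam H \<le> \<Lambda>" and pos: "\<forall>e \<in> set H. lam (fst (snd e)) \<ge> 1"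
    and bud: "ereal \<Lambda> \<le> ereal F * inv_Phibar as t"
  shows "real (length (filter (\<lambda>e. ereal (lam (fst (snd e))) \<ge> inv_Phibar as t) H)) \<le> max 0 F"
proof -
  define q where "q = length (filter (\<lambda>e. ereal (lam (fst (snd e))) \<ge> inv_Phibar as t) H)"
  show ?thesis
  proof (cases "q = 0")
    case True then show ?thesis unfolding q_def by simp
  next
    case False
    then obtain e where e: "e \<in> set H" "ereal (lam (fst (snd e))) \<ge> inv_Phibar as t"
      unfolding q_def by (metis filter_False length_0_conv)
    then obtain c where c: "inv_Phibar as t = ereal c" using inv_ge1[of as t] by (cases "inv_Phibar as t") auto
    have c1: "c \<ge> 1" using inv_ge1[of as t] c by simp
    have Hne: "H \<noteq> []" using e by auto
    have "filter (\<lambda>e. ereal (lam (fst (snd e))) \<ge> inv_Phibar as t) H = filter (\<lambda>e. lam (fst (snd e)) \<ge> c) H"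
      using c by simp
    then have "real q * c \<le> hist_cost lam H" using count_cost[of H lam c] pos c1 unfolding q_def by force
    also have "\<dots> \<le> \<Lambda>" using H Hne by simp
    finally have "ereal (real q * c) \<le> ereal F * ereal c" using bud c by simp
    then have "real q * c \<le> F * c" by simp
    then have "real q \<le> F" using c1 by simp
    then show ?thesis unfolding q_def by simp
  qed
qed

lemma outer_avg:
  fixes G :: "'i \<Rightarrow> 'w \<Rightarrow> ennreal" and r :: ennreal
  assumes M: "prob_space M" and fin: "finite I" and ne: "I \<noteq> {}"
    and H: "\<And>w. w \<in> space M \<Longrightarrow> of_nat (card I) * r \<le> (\<Sum>i\<in>I. G i w)"
  shows "\<exists>i\<in>I. r \<le> outer_nn_integral M (G i)"
proof (rule ccontr)
  assume "\<not> ?thesis"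
  then have lt: "\<forall>i\<in>I. outer_nn_integral M (G i) < r" by auto
  have "\<forall>i\<in>I. \<exists>h. h \<in> borel_measurable M \<and> (\<forall>w \<in> space M. G i w \<le> h w) \<and> integral\<^sup>N M h < r"
  proof
    fix i assume "i \<in> I"
    then have "(INF h \<in> {h \<in> borel_measurable M. \<forall>w \<in> space M. G i w \<le> h w}. integral\<^sup>N M h) < r"
      using lt unfolding outer_nn_integral_def by blast
    then show "\<exists>h. h \<in> borel_measurable M \<and> (\<forall>w \<in> space M. G i w \<le> h w) \<and> integral\<^sup>N M h < r"
      by (simp add: INF_less_iff)
  qed
  then obtain h where h: "\<And>i. i \<in> I \<Longrightarrow> h i \<in> borel_measurable M"
    "\<And>i w. i \<in> I \<Longrightarrow> w \<in> space M \<Longrightarrow> G i w \<le> h i w"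
    "\<And>i. i \<in> I \<Longrightarrow> integral\<^sup>N M (h i) < r"
    by metis
  define m where "m = Max ((\<lambda>i. integral\<^sup>N M (h i)) ` I)"
  have mlt: "m < r" unfolding m_def using fin ne h(3) by (subst Max_less_iff) auto
  have "(\<integral>\<^sup>+ w. (\<Sum>i\<in>I. h i w) \<partial>M) = (\<Sum>i\<in>I. integral\<^sup>N M (h i))"
    using h(1) by (rule nn_integral_sum)
  also have "\<dots> \<le> (\<Sum>i\<in>I. m)" unfolding m_def using fin by (intro sum_mono) auto
  also have "\<dots> = of_nat (card I) * m" by simp
  also have "\<dots> < of_nat (card I) * r"
  proof -
    have "of_nat (card I) > (0::ennreal)" using fin ne by (simp add: card_gt_0_iff)
    moreover have "of_nat (card I) < (top::ennreal)" using of_nat_less_top by blast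
    ultimately show ?thesis using mlt by (metis ennreal_mult_strict_left_mono)
  qed
  finally have A: "(\<integral>\<^sup>+ w. (\<Sum>i\<in>I. h i w) \<partial>M) < of_nat (card I) * r" .
  have "(\<integral>\<^sup>+ w. of_nat (card I) * r \<partial>M) \<le> (\<integral>\<^sup>+ w. (\<Sum>i\<in>I. h i w) \<partial>M)"
  proof (rule nn_integral_mono)
    fix w assume w: "w \<in> space M"
    have "of_nat (card I) * r \<le> (\<Sum>i\<in>I. G i w)" using H[OF w] .
    also have "\<dots> \<le> (\<Sum>i\<in>I. h i w)" using h(2) w by (intro sum_mono) auto
    finally show "of_nat (card I) * r \<le> (\<Sum>i\<in>I. h i w)" .
  qed
  moreover have "(\<integral>\<^sup>+ w. of_nat (card I) * r \<partial>M) = of_nat (card I) * r"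
    using M by (simp add: nn_integral_const prob_space.emeasure_space_1)
  ultimately show False using A by simp
qed

context hpc
begin

lemma RT_sub_RC: "RT j U x \<subseteq> RC j U xs x" unfolding RC_def by auto

lemma RC_eq_RT:
  assumes ne: "idx (Suc j) x \<noteq> idx (Suc j) xs" and xs: "idx j xs < U"
  shows "RC j U xs x = RT j U x"
proof -
  have "g \<in> RT j U x" if g: "idx g x = idx g xs" for g
  proof (cases "g \<le> j")
    case True
    have "idx g xs * K ^ (j - g) \<le> idx j xs" using idx_le[OF True, of xs] by simp
    then show ?thesis using True g xs unfolding RT_def by simp
  next
    case False
    then have "Suc j \<le> g" by simp
    then have "idx (Suc j) x = idx (Suc j) xs" using same_mono g by blast
    then show ?thesis using ne by simp
  qed
  then show ?thesis unfolding RC_def by auto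
qed

lemma vl_RT_le: "vl \<nu> \<rho> (RT j U x) \<le> - \<nu> * \<rho> ^ j"
proof -
  have "Suc j \<notin> RT j U x" unfolding RT_def by simp
  then show ?thesis by (rule vl_le) (use nu rho0 rho1 in auto)
qed

lemma vl_diff:
  assumes xs: "idx j xs < U"
  shows "\<bar>vl \<nu> \<rho> (RC j U xs x) - vl \<nu> \<rho> (RT j U x)\<bar> \<le> \<nu> * \<rho> ^ j"
proof (cases "idx (Suc j) x = idx (Suc j) xs")
  case False
  then have e: "vl \<nu> \<rho> (RC j U xs x) = vl \<nu> \<rho> (RT j U x)" by (simp only: RC_eq_RT[OF False xs])
  have p: "0 \<le> \<nu> * \<rho> ^ j" using nu rho0 by (intro mult_nonneg_nonneg) auto
  show ?thesis unfolding e diff_self abs_zero using p .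
next
  case True
  then have "idx j x = idx j xs" by (intro same_mono[of j "Suc j"]) auto
  then have jT: "j \<in> RT j U x" using xs unfolding RT_def by simp
  have a: "vl \<nu> \<rho> (RT j U x) \<ge> - \<nu> * \<rho> ^ j"
    using vl_ge[OF dcl_RT jT] nu rho0 rho1 by simp
  have b: "vl \<nu> \<rho> (RC j U xs x) \<ge> - \<nu> * \<rho> ^ j"
    using vl_ge[OF dcl_RC, of j] jT RT_sub_RC nu rho0 rho1 by (meson less_imp_le subsetD)
  show ?thesis using a b f_le[of "RT j U x"] f_le[of "RC j U xs x"] by linarith
qed

lemma Sup_RC: "Sup (range (\<lambda>x. vl \<nu> \<rho> (RC j U xs x))) = 0"
proof -
  have "vl \<nu> \<rho> (RC j U xs xs) = 0" unfolding RC_self vl_UNIV ..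
  then show ?thesis using f_le
    by (intro cSup_eq_maximum) (auto intro: range_eqI)
qed


lemma partA_core:
  fixes lam :: "real \<Rightarrow> real" and as :: asm and \<Lambda> :: real and M :: "'w measure"
    and Q :: "'w \<Rightarrow> 'x hist \<Rightarrow> 'x \<times> real" and out :: "'w \<Rightarrow> 'x hist \<Rightarrow> 'x"
  assumes as: "asm_params_ok as" and lam: "bij_betw lam {0..1} {1..}" and M: "prob_space M"
    and Qr: "\<And>w H. snd (Q w H) \<in> {0..1}"
    and Ub: "\<And>g. g \<le> j \<Longrightarrow> U \<le> K ^ (j - g) * nat \<lfloor>\<rho> powr (- d * real g)\<rfloor>" and U1: "1 \<le> U"
    and tj: "\<nu> * \<rho> ^ j \<le> t"
    and bud: "ereal \<Lambda> \<le> ereal F * inv_Phibar as t"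
    and qU: "max 0 F < real U"
  shows "\<exists>f \<in> fun_class K P \<nu> \<rho> d C. \<exists>fz \<in> fid_class as f lam.
           simple_regret M Q out lam \<Lambda> f fz \<ge> ennreal (\<nu> * \<rho> ^ j / 2)"
proof -
  define N where "N = K * U"
  have "U \<le> K ^ j" using Ub[of 0] rho0 by simp
  then have NK: "N \<le> K ^ Suc j" unfolding N_def by simp
  define xc where "xc = (\<lambda>c. SOME x. x \<in> P (Suc j) c)"
  have xc_mem: "xc c \<in> P (Suc j) c" if "c < N" for c
  proof -
    have "P (Suc j) c \<noteq> {}" using P_ne NK that by simp
    then show ?thesis unfolding xc_def by (simp add: some_in_eq)
  qed
  have xc_idx: "idx (Suc j) (xc c) = c" if "c < N" for c
    using idx_unique xc_mem[OF that] NK that by simp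
  have xc_idxj: "idx j (xc c) < U" if "c < N" for c
  proof -
    have "idx j (xc c) = c div K" using idx_Suc[of j "xc c"] xc_idx[OF that] by simp
    also have "\<dots> < U" using that unfolding N_def using Kpos
      by (simp add: less_mult_imp_div_less mult.commute)
    finally show ?thesis .
  qed
  define g where "g = (\<lambda>x. vl \<nu> \<rho> (RT j U x))"
  define fc where "fc = (\<lambda>c x. vl \<nu> \<rho> (RC j U (xc c) x))"
  define fzc where "fzc = (\<lambda>c z x. if ereal (lam z) < inv_Phibar as t then g x else fc c x)"
  define fz0 where "fz0 = (\<lambda>(z::real) x. g x)"
  have fc_class: "fc c \<in> fun_class K P \<nu> \<rho> d C" if "c < N" for c
    unfolding fc_def by (rule class_mem[OF Ub xc_idxj[OF that]])
  have fzc_fid: "fzc c \<in> fid_class as (fc c) lam" if "c < N" for c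
  proof -
    have "\<bar>fc c x - g x\<bar> \<le> t" for x
      using vl_diff[OF xc_idxj[OF that], of x] tj unfolding fc_def g_def by linarith
    then show ?thesis unfolding fzc_def by (rule fid_mem[OF as lam])
  qed
  define G where "G = (\<lambda>c w. ennreal (Sup (range (fc c)) - fc c (out w (final_hist lam \<Lambda> (fzc c) (Q w)))))"
  have lam1: "\<And>z. z \<in> {0..1} \<Longrightarrow> lam z \<ge> 1" using lam unfolding bij_betw_def by auto
  have avg: "of_nat (card {..<N}) * ennreal (\<nu> * \<rho> ^ j / 2) \<le> (\<Sum>c\<in>{..<N}. G c w)" for w
  proof -
    define R0 where "R0 = final_hist lam \<Lambda> fz0 (Q w)"
    define high where "high = (\<lambda>e::'x \<times> real \<times> real. inv_Phibar as t \<le> ereal (lam (fst (snd e))))"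
    define Hit where "Hit = {c \<in> {..<N}. (\<exists>e \<in> set R0. high e \<and> idx (Suc j) (fst e) = c) \<or> idx (Suc j) (out w R0) = c}"
    have R0run: "R0 = run_hist lam \<Lambda> fz0 (Q w) (nat \<lfloor>\<Lambda>\<rfloor> + 1)" unfolding R0_def final_hist_def ..
    have qb: "real (length (filter high R0)) \<le> max 0 F"
    proof -
      have pos: "\<forall>e \<in> set R0. lam (fst (snd e)) \<ge> 1"
      proof
        fix e assume "e \<in> set R0"
        then obtain H where "Q w H = (fst e, fst (snd e))" using run_entries unfolding R0run by blast
        then have "fst (snd e) \<in> {0..1}" using Qr[of w H] by simp
        then show "lam (fst (snd e)) \<ge> 1" using lam1 by blast
      qed
      show ?thesis unfolding high_def using count_high[OF _ pos bud] run_cost unfolding R0run by blast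
    qed
    have Hit_sub: "Hit \<subseteq> (\<lambda>e. idx (Suc j) (fst e)) ` set (filter high R0) \<union> {idx (Suc j) (out w R0)}"
      unfolding Hit_def by auto
    have "card Hit \<le> card ((\<lambda>e. idx (Suc j) (fst e)) ` set (filter high R0) \<union> {idx (Suc j) (out w R0)})"
      by (rule card_mono[OF _ Hit_sub]) simp
    also have "\<dots> \<le> card ((\<lambda>e. idx (Suc j) (fst e)) ` set (filter high R0)) + 1"
      using card_Un_le[of "(\<lambda>e. idx (Suc j) (fst e)) ` set (filter high R0)" "{idx (Suc j) (out w R0)}"] by simp
    also have "\<dots> \<le> length (filter high R0) + 1"
      using card_image_le[of "set (filter high R0)" "\<lambda>e. idx (Suc j) (fst e)"] card_length[of "filter high R0"]
      by (simp del: set_filter)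
    finally have cH1: "card Hit \<le> length (filter high R0) + 1" .
    have "real (length (filter high R0)) < real U" using qb qU by linarith
    then have "length (filter high R0) < U" by simp
    then have cH: "card Hit \<le> U" using cH1 by simp
    have good: "G c w \<ge> ennreal (\<nu> * \<rho> ^ j)" if c: "c \<in> {..<N} - Hit" for c
    proof -
      have cN: "c < N" using c by simp
      have nh: "\<And>e. e \<in> set R0 \<Longrightarrow> high e \<Longrightarrow> idx (Suc j) (fst e) \<noteq> c"
        and no: "idx (Suc j) (out w R0) \<noteq> c" using c unfolding Hit_def by auto
      have fcg: "fc c x = g x" if "idx (Suc j) x \<noteq> c" for x
        unfolding fc_def g_def using RC_eq_RT[OF _ xc_idxj[OF cN]] that xc_idx[OF cN] by simp
      have same: "final_hist lam \<Lambda> (fzc c) (Q w) = R0"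
        unfolding R0run final_hist_def
      proof (rule run_cmp)
        fix x z y assume xzy: "(x, z, y) \<in> set (run_hist lam \<Lambda> fz0 (Q w) (nat \<lfloor>\<Lambda>\<rfloor> + 1))"
        show "fzc c z x = fz0 z x"
        proof (cases "ereal (lam z) < inv_Phibar as t")
          case True then show ?thesis unfolding fzc_def fz0_def by simp
        next
          case False
          then have "high (x, z, y)" unfolding high_def by simp
          then have "idx (Suc j) x \<noteq> c" using nh[of "(x, z, y)"] xzy unfolding R0run by simp
          then show ?thesis using False fcg unfolding fzc_def fz0_def by simp
        qed
      qed
      have "Sup (range (fc c)) = 0" unfolding fc_def by (rule Sup_RC)
      moreover have "fc c (out w R0) \<le> - \<nu> * \<rho> ^ j" using fcg[OF no] vl_RT_le unfolding g_def by simp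
      ultimately have "\<nu> * \<rho> ^ j \<le> Sup (range (fc c)) - fc c (out w (final_hist lam \<Lambda> (fzc c) (Q w)))"
        using same by simp
      then show ?thesis unfolding G_def by (rule ennreal_leI)
    qed
    have "(\<Sum>c\<in>{..<N} - Hit. ennreal (\<nu> * \<rho> ^ j)) \<le> (\<Sum>c\<in>{..<N} - Hit. G c w)"
      using good by (rule sum_mono)
    also have "\<dots> \<le> (\<Sum>c\<in>{..<N}. G c w)" by (rule sum_mono2) auto
    finally have s1: "of_nat (card ({..<N} - Hit)) * ennreal (\<nu> * \<rho> ^ j) \<le> (\<Sum>c\<in>{..<N}. G c w)" by simp
    have HN: "Hit \<subseteq> {..<N}" unfolding Hit_def by auto
    have cd: "card ({..<N} - Hit) = N - card Hit" using card_Diff_subset[OF _ HN] finite_subset[OF HN] by simp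
    have "N \<ge> 2 * U" unfolding N_def using K2 by simp
    then have "real N / 2 \<le> real (N - card Hit)" using cH by linarith
    then have "real N * (\<nu> * \<rho> ^ j / 2) \<le> real (N - card Hit) * (\<nu> * \<rho> ^ j)"
      using nu rho0 by (simp add: mult_right_mono divide_le_eq)
    then have "ennreal (real N * (\<nu> * \<rho> ^ j / 2)) \<le> ennreal (real (N - card Hit) * (\<nu> * \<rho> ^ j))"
      by (rule ennreal_leI)
    moreover have "ennreal (real N * (\<nu> * \<rho> ^ j / 2)) = of_nat N * ennreal (\<nu> * \<rho> ^ j / 2)"
      by (subst ennreal_mult') (simp_all add: ennreal_of_nat_eq_real_of_nat)
    moreover have "ennreal (real (N - card Hit) * (\<nu> * \<rho> ^ j)) = of_nat (N - card Hit) * ennreal (\<nu> * \<rho> ^ j)"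
      by (subst ennreal_mult') (simp_all add: ennreal_of_nat_eq_real_of_nat)
    ultimately have "of_nat N * ennreal (\<nu> * \<rho> ^ j / 2) \<le> of_nat (N - card Hit) * ennreal (\<nu> * \<rho> ^ j)"
      by simp
    then show ?thesis using s1 cd by simp
  qed
  have "0 < N" unfolding N_def using Kpos U1 by simp
  then have NI: "{..<N} \<noteq> {}" by auto
  have ex: "\<exists>c\<in>{..<N}. ennreal (\<nu> * \<rho> ^ j / 2) \<le> outer_nn_integral M (G c)"
    by (rule outer_avg[OF M finite_lessThan NI avg])
  then obtain c where c: "c \<in> {..<N}" and cr: "ennreal (\<nu> * \<rho> ^ j / 2) \<le> outer_nn_integral M (G c)"
    by blast
  have "simple_regret M Q out lam \<Lambda> (fc c) (fzc c) = outer_nn_integral M (G c)"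
    unfolding simple_regret_def G_def ..
  then have "simple_regret M Q out lam \<Lambda> (fc c) (fzc c) \<ge> ennreal (\<nu> * \<rho> ^ j / 2)" using cr by simp
  moreover have "fc c \<in> fun_class K P \<nu> \<rho> d C" using fc_class c by simp
  moreover have "fzc c \<in> fid_class as (fc c) lam" using fzc_fid c by simp
  ultimately show ?thesis by blast
qed

end

lemma floor_half: assumes "y \<ge> (1::real)" shows "real (nat \<lfloor>y\<rfloor>) > y / 2"
proof (cases "y < 2")
  case True
  then have "\<lfloor>y\<rfloor> = 1" using assms by (intro floor_unique) auto
  then show ?thesis using True by simp
next
  case False
  have "real_of_int \<lfloor>y\<rfloor> > y - 1" by linarith
  moreover have "\<lfloor>y\<rfloor> \<ge> 0" using assms by simp
  ultimately have "real (nat \<lfloor>y\<rfloor>) = real_of_int \<lfloor>y\<rfloor>" by simp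
  then show ?thesis using False \<open>real_of_int \<lfloor>y\<rfloor> > y - 1\<close> by linarith
qed

context hpc
begin

lemma rpd_ge1: "\<rho> powr (- d * real g) \<ge> 1"
proof -
  have "\<rho> powr (d * real g) \<le> 1" using rp_le1 d0 by simp
  moreover have "\<rho> powr (- d * real g) = 1 / \<rho> powr (d * real g)" by (simp add: powr_minus_divide)
  moreover have "\<rho> powr (d * real g) > 0" using rho0 by simp
  ultimately show ?thesis by simp
qed

lemma term_gt:
  assumes gJ: "g \<le> J" and sJ: "\<rho> ^ J \<le> s" and s0: "s > 0"
  shows "real (K ^ (J - g) * nat \<lfloor>\<rho> powr (- d * real g)\<rfloor>) > s powr (- d) / real K"
proof -
  define y where "y = \<rho> powr (- d * real g)"
  have y1: "y \<ge> 1" unfolding y_def by (rule rpd_ge1)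
  have "real (K ^ (J - g) * nat \<lfloor>y\<rfloor>) = real K ^ (J - g) * real (nat \<lfloor>y\<rfloor>)" by simp
  also have "\<dots> > real K ^ (J - g) * (y / 2)"
    using floor_half[OF y1] Kpos by (intro mult_strict_left_mono) auto
  finally have A: "real (K ^ (J - g) * nat \<lfloor>y\<rfloor>) > real K ^ (J - g) * y / 2" by simp
  have "(\<rho> powr (- d)) ^ (J - g) \<le> real K ^ (J - g)"
    using rd_le_K by (intro power_mono) auto
  moreover have "\<rho> powr (- d * real J) = y * (\<rho> powr (- d)) ^ (J - g)"
    unfolding y_def using rho0 gJ
    by (simp add: powr_power powr_add[symmetric] algebra_simps of_nat_diff)
  ultimately have B: "\<rho> powr (- d * real J) \<le> real K ^ (J - g) * y"
    using y1 by (simp add: mult.commute mult_left_mono)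
  have "s powr (- d) \<le> (\<rho> ^ J) powr (- d)"
    using sJ rho0 d0 by (intro powr_mono2') auto
  also have "(\<rho> ^ J) powr (- d) = \<rho> powr (- d * real J)"
    using rho0 by (simp add: powr_realpow[symmetric] powr_powr mult.commute)
  finally have C: "s powr (- d) \<le> real K ^ (J - g) * y" using B by simp
  have "s powr (- d) / real K \<le> s powr (- d) / 2" using K2 by (intro divide_left_mono) auto
  then show ?thesis using A C unfolding y_def by linarith
qed

lemma exists_triv:
  assumes as: "asm_params_ok as" and lam: "bij_betw lam {0..1} {1..}"
  shows "\<exists>f \<in> fun_class K P \<nu> \<rho> d C. \<exists>fz \<in> fid_class as f lam. True"
proof -
  have "(\<lambda>x. vl \<nu> \<rho> (RC 0 1 x0 x)) \<in> fun_class K P \<nu> \<rho> d C"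
    by (rule class_mem) (use rho0 idx_0 in auto)
  then show ?thesis using fid_mem_triv[OF as lam] by blast
qed


lemma partA:
  fixes lam :: "real \<Rightarrow> real" and as :: asm and \<Lambda> :: real and M :: "'w measure"
    and Q :: "'w \<Rightarrow> 'x hist \<Rightarrow> 'x \<times> real" and out :: "'w \<Rightarrow> 'x hist \<Rightarrow> 'x"
  assumes as: "asm_params_ok as" and lam: "bij_betw lam {0..1} {1..}" and M: "prob_space M"
    and Qr: "\<And>w H. snd (Q w H) \<in> {0..1}"
  shows "\<exists>f \<in> fun_class K P \<nu> \<rho> d C. \<exists>fz \<in> fid_class as f lam.
        simple_regret M Q out lam \<Lambda> f fz \<ge>
          (SUP r \<in> {r. 0 < r \<and> r \<le> \<nu> * \<rho> / 2 \<and>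
                      ereal \<Lambda> \<le> ereal (1 / real K * (2 * r / (\<nu> * \<rho>)) powr (- d))
                                   * inv_Phibar as (2 * r / \<rho>)}. ennreal r)"
proof -
  define Sa where "Sa = {r. 0 < r \<and> r \<le> \<nu> * \<rho> / 2 \<and>
                      ereal \<Lambda> \<le> ereal (1 / real K * (2 * r / (\<nu> * \<rho>)) powr (- d))
                                   * inv_Phibar as (2 * r / \<rho>)}"
  have "\<exists>f \<in> fun_class K P \<nu> \<rho> d C. \<exists>fz \<in> fid_class as f lam.
        simple_regret M Q out lam \<Lambda> f fz \<ge> (SUP r \<in> Sa. ennreal r)"
  proof (cases "Sa = {}")
    case True
    then show ?thesis using exists_triv[OF as lam] by simp
  next
    case False
    define sf where "sf = (\<lambda>r. 2 * r / (\<nu> * \<rho>))"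
    have ex: "\<exists>j. \<exists>r \<in> Sa. \<rho> ^ j \<le> sf r"
    proof -
      obtain r where r: "r \<in> Sa" using False by blast
      then have "sf r > 0" unfolding Sa_def sf_def using nu rho0 by simp
      then obtain j where "\<rho> ^ j < sf r" using real_arch_pow_inv rho1 by blast
      then show ?thesis using r by (meson less_imp_le)
    qed
    define J where "J = (LEAST j. \<exists>r \<in> Sa. \<rho> ^ j \<le> sf r)"
    have "\<exists>r \<in> Sa. \<rho> ^ J \<le> sf r" unfolding J_def using ex by (rule LeastI_ex)
    then obtain r1 where r1: "r1 \<in> Sa" "\<rho> ^ J \<le> sf r1" by blast
    have r1pos: "0 < r1" and r1b: "ereal \<Lambda> \<le> ereal (1 / real K * (sf r1) powr (- d)) * inv_Phibar as (2 * r1 / \<rho>)"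
      using r1(1) unfolding Sa_def sf_def by auto
    have sf1: "sf r1 > 0" unfolding sf_def using r1pos nu rho0 by simp
    define U where "U = Min ((\<lambda>g. K ^ (J - g) * nat \<lfloor>\<rho> powr (- d * real g)\<rfloor>) ` {..J})"
    define F where "F = 1 / real K * (sf r1) powr (- d)"
    have Ub: "U \<le> K ^ (J - g) * nat \<lfloor>\<rho> powr (- d * real g)\<rfloor>" if "g \<le> J" for g
      unfolding U_def using that by (intro Min_le) auto
    have Ugt: "real U > F"
    proof -
      have "U \<in> (\<lambda>g. K ^ (J - g) * nat \<lfloor>\<rho> powr (- d * real g)\<rfloor>) ` {..J}"
        unfolding U_def by (intro Min_in) auto
      then obtain g where g: "g \<le> J" "U = K ^ (J - g) * nat \<lfloor>\<rho> powr (- d * real g)\<rfloor>" by auto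
      show ?thesis unfolding F_def g(2) using term_gt[OF g(1) r1(2) sf1] by simp
    qed
    have F0: "F > 0" unfolding F_def using sf1 Kpos by simp
    have U1: "1 \<le> U" using Ugt F0 by linarith
    have tj: "\<nu> * \<rho> ^ J \<le> 2 * r1 / \<rho>"
    proof -
      have "\<nu> * \<rho> ^ J \<le> \<nu> * sf r1" using r1(2) nu by simp
      also have "\<dots> = 2 * r1 / \<rho>" unfolding sf_def using nu by simp
      finally show ?thesis .
    qed
    have qU: "max 0 F < real U" using Ugt F0 by simp
    have "\<exists>f \<in> fun_class K P \<nu> \<rho> d C. \<exists>fz \<in> fid_class as f lam.
           simple_regret M Q out lam \<Lambda> f fz \<ge> ennreal (\<nu> * \<rho> ^ J / 2)"
      by (rule partA_core[OF as lam M, where j=J and U=U and F=F and t="2*r1/\<rho>"])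
        (fact Qr Ub U1 tj qU r1b[folded F_def])+
    then obtain f fz where f: "f \<in> fun_class K P \<nu> \<rho> d C" and fz: "fz \<in> fid_class as f lam"
      and reg: "simple_regret M Q out lam \<Lambda> f fz \<ge> ennreal (\<nu> * \<rho> ^ J / 2)" by blast
    have bound: "r \<le> \<nu> * \<rho> ^ J / 2" if r: "r \<in> Sa" for r
    proof (cases J)
      case 0
      have "r \<le> \<nu> * \<rho> / 2" using r unfolding Sa_def by simp
      also have "\<dots> \<le> \<nu> * 1 / 2" using rho1 nu by (intro divide_right_mono mult_left_mono) auto
      finally show ?thesis using 0 by simp
    next
      case (Suc J')
      have "J' < J" using Suc by simp
      then have "\<not> (\<exists>r \<in> Sa. \<rho> ^ J' \<le> sf r)" unfolding J_def using not_less_Least by blast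
      then have "sf r < \<rho> ^ J'" using r by auto
      then have "2 * r / (\<nu> * \<rho>) < \<rho> ^ J'" unfolding sf_def .
      then have "2 * r < \<rho> ^ J' * (\<nu> * \<rho>)" using nu rho0 by (simp add: divide_less_eq)
      then show ?thesis using Suc by (simp add: algebra_simps)
    qed
    have "(SUP r \<in> Sa. ennreal r) \<le> ennreal (\<nu> * \<rho> ^ J / 2)"
      by (rule SUP_least) (use bound in \<open>simp add: ennreal_leI\<close>)
    then show ?thesis using f fz reg by (meson order_trans)
  qed
  then show ?thesis unfolding Sa_def .
qed

end

definition Ls :: "nat \<Rightarrow> bool list set" where "Ls n = {xs. length xs = n}"

lemma Ls_alt: "Ls n = {xs. set xs \<subseteq> UNIV \<and> length xs = n}" unfolding Ls_def by simp

lemma finite_Ls: "finite (Ls n)"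
  unfolding Ls_alt by (rule finite_lists_length_eq) simp

lemma card_Ls: "card (Ls n) = 2 ^ n"
  unfolding Ls_alt by (subst card_lists_length_eq) simp_all

lemma Ls_ne: "Ls n \<noteq> {}"
  using card_Ls[of n] by auto

lemma bij_app:
  assumes "length a = k" "k \<le> L"
  shows "bij_betw (\<lambda>b. a @ b) (Ls (L - k)) {p \<in> Ls L. take k p = a}"
proof (rule bij_betwI')
  show "\<And>x y. x \<in> Ls (L - k) \<Longrightarrow> y \<in> Ls (L - k) \<Longrightarrow> (a @ x = a @ y) = (x = y)" by simp
  show "\<And>x. x \<in> Ls (L - k) \<Longrightarrow> a @ x \<in> {p \<in> Ls L. take k p = a}"
    using assms unfolding Ls_def by auto
  show "\<exists>x\<in>Ls (L - k). y = a @ x" if "y \<in> {p \<in> Ls L. take k p = a}" for y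
  proof -
    have "y = take k y @ drop k y" by simp
    then have "y = a @ drop k y" using that by (metis (mono_tags, lifting) mem_Collect_eq)
    then show ?thesis using that assms unfolding Ls_def by (intro bexI[of _ "drop k y"]) auto
  qed
qed

lemma card_prefix:
  assumes "length a = k" "k \<le> L"
  shows "card {p \<in> Ls L. take k p = a} = 2 ^ (L - k)"
  using bij_betw_same_card[OF bij_app[OF assms]] card_Ls by simp

lemma sum_prefix:
  assumes "length a = k" "k \<le> L"
  shows "(\<Sum>b\<in>Ls (L - k). F (a @ b)) = (\<Sum>p \<in> {p \<in> Ls L. take k p = a}. F p)"
  using sum.reindex_bij_betw[OF bij_app[OF assms], of F] by simp

lemma swap_stop:
  fixes \<kappa> :: "bool list \<Rightarrow> nat" and F :: "bool list \<Rightarrow> real"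
  assumes kL: "\<And>p. p \<in> Ls L \<Longrightarrow> \<kappa> p \<le> L"
    and stop: "\<And>p p'. p \<in> Ls L \<Longrightarrow> p' \<in> Ls L \<Longrightarrow> take (\<kappa> p) p = take (\<kappa> p) p' \<Longrightarrow> \<kappa> p' = \<kappa> p"
  shows "(\<Sum>p\<in>Ls L. F p) = (\<Sum>p\<in>Ls L. (\<Sum>b\<in>Ls (L - \<kappa> p). F (take (\<kappa> p) p @ b)) / 2 ^ (L - \<kappa> p))"
proof -
  have len: "length (take (\<kappa> p) p) = \<kappa> p" if "p \<in> Ls L" for p
    using kL[OF that] that unfolding Ls_def by simp
  have "(\<Sum>p\<in>Ls L. (\<Sum>b\<in>Ls (L - \<kappa> p). F (take (\<kappa> p) p @ b)) / 2 ^ (L - \<kappa> p))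
      = (\<Sum>p\<in>Ls L. (\<Sum>p'\<in>Ls L. (if take (\<kappa> p) p' = take (\<kappa> p) p then F p' else 0)) / 2 ^ (L - \<kappa> p))"
  proof (rule sum.cong[OF refl])
    fix p assume p: "p \<in> Ls L"
    have "(\<Sum>b\<in>Ls (L - \<kappa> p). F (take (\<kappa> p) p @ b)) = (\<Sum>p' \<in> {p' \<in> Ls L. take (\<kappa> p) p' = take (\<kappa> p) p}. F p')"
      by (rule sum_prefix[OF len[OF p] kL[OF p]])
    also have "\<dots> = (\<Sum>p'\<in>Ls L. (if take (\<kappa> p) p' = take (\<kappa> p) p then F p' else 0))"
      using finite_Ls by (simp add: sum.inter_filter)
    finally show "(\<Sum>b\<in>Ls (L - \<kappa> p). F (take (\<kappa> p) p @ b)) / 2 ^ (L - \<kappa> p) =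
        (\<Sum>p'\<in>Ls L. (if take (\<kappa> p) p' = take (\<kappa> p) p then F p' else 0)) / 2 ^ (L - \<kappa> p)" by simp
  qed
  also have "\<dots> = (\<Sum>p\<in>Ls L. \<Sum>p'\<in>Ls L. (if take (\<kappa> p) p' = take (\<kappa> p) p then F p' / 2 ^ (L - \<kappa> p) else 0))"
    by (simp add: sum_divide_distrib) (intro sum.cong refl, simp)
  also have "\<dots> = (\<Sum>p'\<in>Ls L. \<Sum>p\<in>Ls L. (if take (\<kappa> p) p' = take (\<kappa> p) p then F p' / 2 ^ (L - \<kappa> p) else 0))"
    by (rule sum.swap)
  also have "\<dots> = (\<Sum>p'\<in>Ls L. F p')"
  proof (rule sum.cong[OF refl])
    fix p' assume p': "p' \<in> Ls L"
    have eq: "(if take (\<kappa> p) p' = take (\<kappa> p) p then F p' / 2 ^ (L - \<kappa> p) else 0)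
          = (if take (\<kappa> p') p = take (\<kappa> p') p' then F p' / 2 ^ (L - \<kappa> p') else 0)" if p: "p \<in> Ls L" for p
    proof (cases "take (\<kappa> p) p' = take (\<kappa> p) p")
      case True
      then have "\<kappa> p' = \<kappa> p" using stop[OF p p'] by simp
      then show ?thesis using True by simp
    next
      case False
      have "\<not> take (\<kappa> p') p = take (\<kappa> p') p'"
      proof
        assume a: "take (\<kappa> p') p = take (\<kappa> p') p'"
        then have "\<kappa> p = \<kappa> p'" using stop[OF p' p] by simp
        then show False using False a by simp
      qed
      then show ?thesis using False by simp
    qed
    have "(\<Sum>p\<in>Ls L. (if take (\<kappa> p) p' = take (\<kappa> p) p then F p' / 2 ^ (L - \<kappa> p) else 0))
        = (\<Sum>p\<in>Ls L. (if take (\<kappa> p') p = take (\<kappa> p') p' then F p' / 2 ^ (L - \<kappa> p') else 0))"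
      using eq by (rule sum.cong[OF refl])
    also have "\<dots> = (\<Sum>p \<in> {p\<in>Ls L. take (\<kappa> p') p = take (\<kappa> p') p'}. F p' / 2 ^ (L - \<kappa> p'))"
      by (rule sum.inter_filter[symmetric, OF finite_Ls])
    also have "\<dots> = real (card {p\<in>Ls L. take (\<kappa> p') p = take (\<kappa> p') p'}) * (F p' / 2 ^ (L - \<kappa> p'))"
      by simp
    also have "\<dots> = F p'"
      using card_prefix[OF len[OF p'] kL[OF p']] by simp
    finally show "(\<Sum>p\<in>Ls L. (if take (\<kappa> p) p' = take (\<kappa> p) p then F p' / 2 ^ (L - \<kappa> p) else 0)) = F p'" .
  qed
  finally show ?thesis by simp
qed

lemma abel:
  fixes D :: "'b \<Rightarrow> nat" and \<rho> :: real
  assumes fin: "finite B" and r0: "0 < \<rho>" and r1: "\<rho> < 1"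
    and DT: "\<And>b. b \<in> B \<Longrightarrow> D b \<le> T"
    and tail: "\<And>i. i < T \<Longrightarrow> real (card {b \<in> B. i < D b}) \<le> real (card B) / 2 ^ i"
  shows "(\<Sum>b\<in>B. \<rho> ^ D b) \<ge> real (card B) * (\<rho> / (2 - \<rho>))"
proof -
  have pw: "\<rho> ^ D b = 1 - (1 - \<rho>) * (\<Sum>i<T. if i < D b then \<rho> ^ i else 0)" if "b \<in> B" for b
  proof -
    have "(\<Sum>i<T. if i < D b then \<rho> ^ i else 0) = (\<Sum>i\<in>{..<T} \<inter> {i. i < D b}. \<rho> ^ i)"
      by (simp add: sum.inter_restrict)
    also have "{..<T} \<inter> {i. i < D b} = {..<D b}" using DT[OF that] by auto
    finally have "(\<Sum>i<T. if i < D b then \<rho> ^ i else 0) = (\<Sum>i<D b. \<rho> ^ i)" .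
    moreover have "(1 - \<rho>) * (\<Sum>i<D b. \<rho> ^ i) = 1 - \<rho> ^ D b"
      by (metis one_diff_power_eq)
    ultimately show ?thesis by simp
  qed
  have "(\<Sum>b\<in>B. \<Sum>i<T. if i < D b then \<rho> ^ i else 0) = (\<Sum>i<T. \<Sum>b\<in>B. if i < D b then \<rho> ^ i else 0)"
    by (rule sum.swap)
  also have "\<dots> = (\<Sum>i<T. \<rho> ^ i * real (card {b \<in> B. i < D b}))"
    using fin by (simp add: sum.inter_filter[symmetric] mult.commute)
  also have "\<dots> \<le> (\<Sum>i<T. \<rho> ^ i * (real (card B) / 2 ^ i))"
    using tail r0 by (intro sum_mono mult_left_mono) auto
  also have "\<dots> = real (card B) * (\<Sum>i<T. (\<rho> / 2) ^ i)"
    by (simp add: sum_distrib_left power_divide mult.commute)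
  also have "\<dots> \<le> real (card B) * (2 / (2 - \<rho>))"
  proof (intro mult_left_mono)
    have "(\<Sum>i<T. (\<rho> / 2) ^ i) = (1 - (\<rho> / 2) ^ T) / (1 - \<rho> / 2)"
      using r1 by (simp add: sum_gp_strict)
    also have "\<dots> \<le> 1 / (1 - \<rho> / 2)" using r0 r1 by (intro divide_right_mono) auto
    also have "\<dots> = 2 / (2 - \<rho>)" by (simp add: field_simps)
    finally show "(\<Sum>i<T. (\<rho> / 2) ^ i) \<le> 2 / (2 - \<rho>)" .
  qed simp
  finally have S: "(\<Sum>b\<in>B. \<Sum>i<T. if i < D b then \<rho> ^ i else 0) \<le> real (card B) * (2 / (2 - \<rho>))" .
  have "(\<Sum>b\<in>B. \<rho> ^ D b) = (\<Sum>b\<in>B. 1 - (1 - \<rho>) * (\<Sum>i<T. if i < D b then \<rho> ^ i else 0))"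
    using pw by (rule sum.cong[OF refl])
  also have "\<dots> = real (card B) - (1 - \<rho>) * (\<Sum>b\<in>B. \<Sum>i<T. if i < D b then \<rho> ^ i else 0)"
    by (simp add: sum_subtractf sum_distrib_left)
  finally have E: "(\<Sum>b\<in>B. \<rho> ^ D b) = real (card B) - (1 - \<rho>) * (\<Sum>b\<in>B. \<Sum>i<T. if i < D b then \<rho> ^ i else 0)" .
  define X where "X = (\<Sum>b\<in>B. \<Sum>i<T. if i < D b then \<rho> ^ i else 0)"
  define Y where "Y = real (card B) * (2 / (2 - \<rho>))"
  have XY: "(1 - \<rho>) * X \<le> (1 - \<rho>) * Y"
    using S r1 unfolding X_def Y_def by (intro mult_left_mono) auto
  have R: "real (card B) - (1 - \<rho>) * Y = real (card B) * (\<rho> / (2 - \<rho>))"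
    using r1 unfolding Y_def by (simp add: field_simps)
  have "real (card B) * (\<rho> / (2 - \<rho>)) \<le> real (card B) - (1 - \<rho>) * X"
    using XY R by linarith
  then show ?thesis unfolding E X_def .
qed

context hp
begin

definition cidx :: "bool list \<Rightarrow> nat" where
  "cidx p = foldl (\<lambda>i b. K * i + (if b then 1 else 0)) 0 p"

lemma cidx_Nil[simp]: "cidx [] = 0" unfolding cidx_def by simp

lemma cidx_snoc: "cidx (a @ [b]) = K * cidx a + (if b then 1 else 0)"
  unfolding cidx_def by simp

lemma bit_lt: "(if b then 1 else 0) < K" using K2 by auto

lemma cidx_append: "cidx (a @ c) = cidx a * K ^ length c + cidx c"
proof (induction c rule: rev_induct)
  case Nil then show ?case by simp
next
  case (snoc x c)
  have "cidx (a @ c @ [x]) = K * cidx (a @ c) + (if x then 1 else 0)"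
    using cidx_snoc[of "a @ c" x] by simp
  also have "\<dots> = cidx a * K ^ length (c @ [x]) + cidx (c @ [x])"
    using snoc by (simp add: cidx_snoc algebra_simps)
  finally show ?case by simp
qed

lemma cidx_lt: "cidx a < K ^ length a"
proof (induction a rule: rev_induct)
  case Nil then show ?case by simp
next
  case (snoc x a)
  have "cidx (a @ [x]) = K * cidx a + (if x then 1 else 0)" by (rule cidx_snoc)
  also have "\<dots> < K * cidx a + K" using bit_lt[of x] by simp
  also have "\<dots> = K * (cidx a + 1)" by simp
  also have "\<dots> \<le> K * K ^ length a" using snoc by (intro mult_left_mono) auto
  finally show ?case by simp
qed

lemma cidx_inj: "length a = length c \<Longrightarrow> cidx a = cidx c \<Longrightarrow> a = c"
proof (induction a arbitrary: c rule: rev_induct)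
  case Nil then show ?case by simp
next
  case (snoc x a)
  obtain c' y where c: "c = c' @ [y]" using snoc.prems(1)
    by (metis length_append_singleton list.size(3) nat.distinct(1) rev_exhaust)
  have l: "length a = length c'" using snoc.prems(1) c by simp
  have e: "K * cidx a + (if x then 1 else 0) = K * cidx c' + (if y then 1 else 0)"
    using snoc.prems(2) c by (simp add: cidx_snoc)
  have "(K * cidx a + (if x then 1 else 0)) mod K = (if x then 1 else 0)"
    using bit_lt[of x] by simp
  moreover have "(K * cidx c' + (if y then 1 else 0)) mod K = (if y then 1 else 0)"
    using bit_lt[of y] by simp
  ultimately have xy: "(if x then 1 else 0) = (if y then 1 else (0::nat))" using e by metis
  then have "x = y" by (cases x; cases y) auto
  moreover have "cidx a = cidx c'" using e xy Kpos by simp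
  ultimately show ?case using snoc.IH[OF l] c by simp
qed

lemma cidx_take_div:
  assumes "k \<le> length q"
  shows "cidx q div K ^ (length q - k) = cidx (take k q)"
proof -
  have q: "q = take k q @ drop k q" by simp
  have "cidx q = cidx (take k q) * K ^ (length q - k) + cidx (drop k q)"
    by (subst q, subst cidx_append) simp
  moreover have "cidx (drop k q) < K ^ (length q - k)" using cidx_lt[of "drop k q"] by simp
  ultimately show ?thesis using Kpos by simp
qed

end

locale tr = hpc K P \<nu> \<rho> d C for K and P :: "nat \<Rightarrow> nat \<Rightarrow> 'x set" and \<nu> \<rho> d C +
  fixes m L :: nat
begin

definition xp :: "bool list \<Rightarrow> 'x" where "xp p = (SOME x. x \<in> P (m + L) (cidx p))"

lemma cidx_ltL: "p \<in> Ls L \<Longrightarrow> cidx p < K ^ (m + L)"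
proof -
  assume "p \<in> Ls L"
  then have "cidx p < K ^ L" using cidx_lt[of p] unfolding Ls_def by simp
  also have "K ^ L \<le> K ^ (m + L)" using Kpos by (intro power_increasing) auto
  finally show ?thesis .
qed

lemma xp_idxL: "p \<in> Ls L \<Longrightarrow> idx (m + L) (xp p) = cidx p"
proof -
  assume p: "p \<in> Ls L"
  have "P (m + L) (cidx p) \<noteq> {}" using P_ne cidx_ltL[OF p] by blast
  then have "xp p \<in> P (m + L) (cidx p)" unfolding xp_def by (simp add: some_in_eq)
  then show ?thesis using idx_unique cidx_ltL[OF p] by blast
qed

lemma IXP: assumes p: "p \<in> Ls L" and k: "k \<le> L" shows "idx (m + k) (xp p) = cidx (take k p)"
proof -
  have "idx (m + k) (xp p) = idx (m + L) (xp p) div K ^ (m + L - (m + k))"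
    by (rule idx_le) (use k in simp)
  also have "\<dots> = cidx p div K ^ (length p - k)" using xp_idxL[OF p] p unfolding Ls_def by simp
  also have "\<dots> = cidx (take k p)" by (rule cidx_take_div) (use k p in \<open>simp add: Ls_def\<close>)
  finally show ?thesis .
qed

lemma IXP0: assumes p: "p \<in> Ls L" and g: "g \<le> m" shows "idx g (xp p) = 0"
proof -
  have "idx m (xp p) = 0" using IXP[OF p, of 0] by simp
  moreover have "idx g (xp p) = idx m (xp p) div K ^ (m - g)" using idx_le g by blast
  ultimately show ?thesis by simp
qed

definition AG :: "'x \<Rightarrow> bool list \<Rightarrow> nat set" where
  "AG x p = {k. k \<le> L \<and> idx (m + k) x = cidx (take k p)}"

definition ag :: "'x \<Rightarrow> bool list \<Rightarrow> nat" where "ag x p = Max (AG x p)"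

definition rv :: "'x \<Rightarrow> bool list \<Rightarrow> nat" where
  "rv x p = (if idx m x = 0 then min (Suc (ag x p)) L else 0)"

lemma AG_fin: "finite (AG x p)" unfolding AG_def by (rule finite_subset[of _ "{..L}"]) auto

lemma AG_0: "idx m x = 0 \<Longrightarrow> 0 \<in> AG x p" unfolding AG_def by simp

lemma AG_down:
  assumes p: "p \<in> Ls L" and k: "k \<in> AG x p" and k': "k' \<le> k"
  shows "k' \<in> AG x p"
proof -
  have kL: "k \<le> L" and e: "idx (m + k) x = cidx (take k p)" using k unfolding AG_def by auto
  have "idx (m + k') x = idx (m + k) x div K ^ (m + k - (m + k'))" by (rule idx_le) (use k' in simp)
  also have "\<dots> = cidx (take k p) div K ^ (length (take k p) - k')" using e p kL unfolding Ls_def by simp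
  also have "\<dots> = cidx (take k' (take k p))" by (rule cidx_take_div) (use p kL k' in \<open>simp add: Ls_def\<close>)
  also have "\<dots> = cidx (take k' p)" using k' by (simp add: min_def)
  finally show ?thesis using kL k' unfolding AG_def by simp
qed

lemma ag_in: "idx m x = 0 \<Longrightarrow> ag x p \<in> AG x p"
proof -
  assume "idx m x = 0"
  then have "AG x p \<noteq> {}" using AG_0 by blast
  then show ?thesis unfolding ag_def using AG_fin by (intro Max_in) auto
qed

lemma ag_ge: "idx m x = 0 \<Longrightarrow> k \<in> AG x p \<Longrightarrow> k \<le> ag x p"
  unfolding ag_def using AG_fin by (intro Max_ge) auto

lemma ag_leL: "idx m x = 0 \<Longrightarrow> ag x p \<le> L"
  using ag_in unfolding AG_def by auto

lemma rv_leL: "rv x p \<le> L" unfolding rv_def by auto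

lemma take_eq_le: "take r p = take r p' \<Longrightarrow> k \<le> r \<Longrightarrow> take k p = take k p'"
  by (metis min.absorb1 take_take)

lemma K1:
  assumes p: "p \<in> Ls L" and p': "p' \<in> Ls L" and tk: "take (rv x p) p = take (rv x p) p'"
  shows "RC m 1 (xp p) x = RC m 1 (xp p') x \<and> rv x p' = rv x p"
proof (cases "idx m x = 0")
  case False
  have "idx g x = idx g (xp p) \<longleftrightarrow> idx g x = idx g (xp p')" for g
  proof (cases "g \<le> m")
    case True then show ?thesis using IXP0[OF p True] IXP0[OF p' True] by simp
  next
    case gm: False
    have "idx g x \<noteq> idx g (xp q)" if q: "q \<in> Ls L" for q
    proof
      assume a1: "idx g x = idx g (xp q)"
      have le: "m \<le> g" using gm by simp
      have "idx m x = idx m (xp q)" using same_mono[OF le a1] .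
      then show False using False IXP0[OF q, of m] by simp
    qed
    then show ?thesis using p p' by blast
  qed
  then show ?thesis using False unfolding RC_def rv_def by auto
next
  case True
  show ?thesis
  proof (cases "rv x p < L")
    case False
    then have "rv x p = L" using rv_leL[of x p] by simp
    then have "p = p'" using tk p p' unfolding Ls_def by simp
    then show ?thesis by simp
  next
    case rL: True
    define a where "a = ag x p"
    have rva: "rv x p = Suc a" and aL: "Suc a < L" using rL True unfolding rv_def a_def by auto
    have aAG: "a \<in> AG x p" using ag_in[OF True] unfolding a_def .
    have nr: "Suc a \<notin> AG x p" using ag_ge[OF True, of "Suc a" p] unfolding a_def by auto
    have tkk: "take k p = take k p'" if "k \<le> Suc a" for k using take_eq_le[OF tk[unfolded rva] that] .
    have AGeq: "AG x p' = AG x p"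
    proof (intro set_eqI iffI)
      fix k assume k: "k \<in> AG x p'"
      show "k \<in> AG x p"
      proof (cases "k \<le> Suc a")
        case True then show ?thesis using k tkk unfolding AG_def by simp
      next
        case False
        then have "Suc a \<in> AG x p'" using AG_down[OF p' k, of "Suc a"] by simp
        then have "Suc a \<in> AG x p" using tkk[of "Suc a"] unfolding AG_def by simp
        then show ?thesis using nr by simp
      qed
    next
      fix k assume k: "k \<in> AG x p"
      then have "k \<le> a" using ag_ge[OF True] unfolding a_def by blast
      then show "k \<in> AG x p'" using k tkk unfolding AG_def by simp
    qed
    have rveq: "rv x p' = rv x p" unfolding rv_def ag_def AGeq ..
    have "idx g x = idx g (xp p) \<longleftrightarrow> idx g x = idx g (xp p')" for g
    proof (cases "g \<le> m + Suc a")
      case True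
      show ?thesis
      proof (cases "g \<le> m")
        case True then show ?thesis using IXP0[OF p True] IXP0[OF p' True] by simp
      next
        case False
        define k where "k = g - m"
        have k: "g = m + k" "k \<le> Suc a" using False \<open>g \<le> m + Suc a\<close> unfolding k_def by auto
        have "idx g (xp p) = idx g (xp p')"
          using IXP[OF p, of k] IXP[OF p', of k] tkk[OF k(2)] k aL by simp
        then show ?thesis by simp
      qed
    next
      case False
      have "idx g x \<noteq> idx g (xp q)" if q: "q \<in> Ls L" and tq: "take (Suc a) q = take (Suc a) p" for q
      proof
        assume a1: "idx g x = idx g (xp q)"
        have le: "m + Suc a \<le> g" using False by simp
        have "idx (m + Suc a) x = idx (m + Suc a) (xp q)" using same_mono[OF le a1] .
        also have "\<dots> = cidx (take (Suc a) q)" using IXP[OF q, of "Suc a"] aL by simp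
        finally have "Suc a \<in> AG x p" using tq aL unfolding AG_def by simp
        then show False using nr by simp
      qed
      then show ?thesis using p p' tkk[of "Suc a"] by auto
    qed
    then have "RC m 1 (xp p) x = RC m 1 (xp p') x" unfolding RC_def by auto
    then show ?thesis using rveq by simp
  qed
qed


lemma TAIL:
  assumes a: "length a = k" and kL: "k \<le> L"
  shows "(\<Sum>b\<in>Ls (L - k). \<rho> ^ max k (rv x (a @ b))) \<ge> 2 ^ (L - k) * (\<rho> / (2 - \<rho>)) * \<rho> ^ k"
proof -
  define D where "D = (\<lambda>b. max k (rv x (a @ b)) - k)"
  have eq: "\<rho> ^ max k (rv x (a @ b)) = \<rho> ^ k * \<rho> ^ D b" for b
    unfolding D_def by (simp add: power_add[symmetric])
  have DT: "D b \<le> L - k" for b unfolding D_def using rv_leL[of x "a @ b"] by simp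
  have tail: "real (card {b \<in> Ls (L - k). i < D b}) \<le> real (card (Ls (L - k))) / 2 ^ i"
    if i: "i < L - k" for i
  proof -
    define C where "C = {c \<in> Ls i. cidx (a @ c) = idx (m + (k + i)) x}"
    have sub: "{b \<in> Ls (L - k). i < D b} \<subseteq> {b \<in> Ls (L - k). take i b \<in> C}"
    proof (intro subsetI CollectI conjI)
      fix b assume b: "b \<in> {b \<in> Ls (L - k). i < D b}"
      then have bL: "b \<in> Ls (L - k)" and iD: "i < D b" by auto
      have abL: "a @ b \<in> Ls L" using bL a kL unfolding Ls_def by simp
      have rvg: "k + i < rv x (a @ b)" using iD unfolding D_def by simp
      then have x0: "idx m x = 0" unfolding rv_def by (cases "idx m x = 0") auto
      then have "k + i < Suc (ag x (a @ b))" using rvg unfolding rv_def by simp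
      then have "k + i \<le> ag x (a @ b)" by simp
      then have "k + i \<in> AG x (a @ b)" using AG_down[OF abL ag_in[OF x0]] by blast
      then have "idx (m + (k + i)) x = cidx (take (k + i) (a @ b))" unfolding AG_def by simp
      also have "take (k + i) (a @ b) = a @ take i b" using a by simp
      finally have "cidx (a @ take i b) = idx (m + (k + i)) x" by simp
      moreover have "take i b \<in> Ls i" using bL i unfolding Ls_def by simp
      ultimately show "take i b \<in> C" unfolding C_def by simp
      show "b \<in> Ls (L - k)" by (rule bL)
    qed
    have C1: "c = c'" if "c \<in> C" "c' \<in> C" for c c'
    proof -
      have "cidx (a @ c) = cidx (a @ c')" "length (a @ c) = length (a @ c')"
        using that unfolding C_def Ls_def by auto
      then show ?thesis using cidx_inj by blast
    qed
    show ?thesis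
    proof (cases "C = {}")
      case True
      then have "{b \<in> Ls (L - k). i < D b} = {}" using sub by auto
      then have "card {b \<in> Ls (L - k). i < D b} = 0" by (simp only: card.empty)
      then show ?thesis by simp
    next
      case False
      then obtain c0 where c0: "c0 \<in> C" by blast
      then have "C = {c0}" using C1 by blast
      then have "{b \<in> Ls (L - k). i < D b} \<subseteq> {b \<in> Ls (L - k). take i b = c0}" using sub by auto
      then have "card {b \<in> Ls (L - k). i < D b} \<le> card {b \<in> Ls (L - k). take i b = c0}"
        by (intro card_mono) (auto intro: finite_subset[OF _ finite_Ls])
      also have "\<dots> = 2 ^ (L - k - i)"
        by (rule card_prefix) (use c0 i in \<open>auto simp: C_def Ls_def\<close>)
      finally have "real (card {b \<in> Ls (L - k). i < D b}) \<le> 2 ^ (L - k - i)"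
        by (metis of_nat_le_iff of_nat_numeral of_nat_power)
      also have "(2::real) ^ (L - k - i) = 2 ^ (L - k) / 2 ^ i"
        using i by (simp add: power_diff power_add)
      finally show ?thesis using card_Ls by simp
    qed
  qed
  have "(\<Sum>b\<in>Ls (L - k). \<rho> ^ D b) \<ge> real (card (Ls (L - k))) * (\<rho> / (2 - \<rho>))"
    by (rule abel[OF finite_Ls rho0 rho1 DT tail])
  then have "(\<Sum>b\<in>Ls (L - k). \<rho> ^ D b) \<ge> 2 ^ (L - k) * (\<rho> / (2 - \<rho>))" using card_Ls by simp
  then have "\<rho> ^ k * (\<Sum>b\<in>Ls (L - k). \<rho> ^ D b) \<ge> \<rho> ^ k * (2 ^ (L - k) * (\<rho> / (2 - \<rho>)))"
    using rho0 by (intro mult_left_mono) auto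
  then show ?thesis unfolding eq sum_distrib_left[symmetric] by (simp add: mult_ac)
qed

end

locale tr2 = tr K P \<nu> \<rho> d C m L for K and P :: "nat \<Rightarrow> nat \<Rightarrow> 'x set" and \<nu> \<rho> d C m L +
  fixes lam :: "real \<Rightarrow> real" and \<Lambda> :: real and Qw :: "'x hist \<Rightarrow> 'x \<times> real" and cth :: ereal
begin

definition gT :: "'x \<Rightarrow> real" where "gT x = vl \<nu> \<rho> (RT m 1 x)"
definition fp :: "bool list \<Rightarrow> 'x \<Rightarrow> real" where "fp p x = vl \<nu> \<rho> (RC m 1 (xp p) x)"
definition fzp :: "bool list \<Rightarrow> real \<Rightarrow> 'x \<Rightarrow> real" where
  "fzp p z x = (if ereal (lam z) < cth then gT x else fp p x)"
definition high :: "'x \<times> real \<times> real \<Rightarrow> bool" where "high e = (cth \<le> ereal (lam (fst (snd e))))"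
definition Hr :: "bool list \<Rightarrow> nat \<Rightarrow> 'x hist" where "Hr p n = run_hist lam \<Lambda> (fzp p) Qw n"
definition kap :: "'x hist \<Rightarrow> bool list \<Rightarrow> nat" where
  "kap H p = Max (insert 0 ((\<lambda>e. rv (fst e) p) ` {e \<in> set H. high e}))"
definition hq :: "'x hist \<Rightarrow> nat" where "hq H = length (filter high H)"

lemma kap_fin: "finite (insert 0 ((\<lambda>e. rv (fst e) p) ` {e \<in> set H. high e}))" by simp

lemma kap_le: "kap H p \<le> L"
  unfolding kap_def using rv_leL by (subst Max_le_iff) auto

lemma kap_ge: "e \<in> set H \<Longrightarrow> high e \<Longrightarrow> rv (fst e) p \<le> kap H p"
  unfolding kap_def by (rule Max_ge) auto

lemma kap_mono: "set H \<subseteq> set H' \<Longrightarrow> kap H p \<le> kap H' p"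
  unfolding kap_def by (rule Max_mono) auto

lemma kap_Nil: "kap [] p = 0" unfolding kap_def by simp

lemma kap_stop:
  assumes p: "p \<in> Ls L" and p': "p' \<in> Ls L" and tk: "take (kap H p) p = take (kap H p) p'"
  shows "kap H p' = kap H p"
proof -
  have "rv (fst e) p' = rv (fst e) p" if "e \<in> set H" "high e" for e
  proof -
    have "take (rv (fst e) p) p = take (rv (fst e) p) p'"
      using take_eq_le[OF tk kap_ge[OF that]] .
    then show ?thesis using K1[OF p p'] by blast
  qed
  then have "(\<lambda>e. rv (fst e) p') ` {e \<in> set H. high e} = (\<lambda>e. rv (fst e) p) ` {e \<in> set H. high e}"
    by (intro image_cong) auto
  then show ?thesis unfolding kap_def by simp
qed

lemma kap_snoc: "kap (H @ [e]) p = (if high e then max (kap H p) (rv (fst e) p) else kap H p)"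
proof -
  have s: "{e' \<in> set (H @ [e]). high e'} = (if high e then insert e {e' \<in> set H. high e'} else {e' \<in> set H. high e'})"
    by auto
  show ?thesis
  proof (cases "high e")
    case True
    then have "kap (H @ [e]) p = Max (insert (rv (fst e) p) (insert 0 ((\<lambda>e. rv (fst e) p) ` {e \<in> set H. high e})))"
      unfolding kap_def s by (simp add: insert_commute)
    also have "\<dots> = max (rv (fst e) p) (kap H p)" unfolding kap_def by (subst Max_insert) auto
    finally show ?thesis using True by simp
  next
    case False then show ?thesis unfolding kap_def s by simp
  qed
qed

lemma hq_snoc: "hq (H @ [e]) = (if high e then Suc (hq H) else hq H)"
  unfolding hq_def by simp

lemma Hr_Suc: "Hr p (Suc n) = (let H = Hr p n; (x, z) = Qw H in
      if hist_cost lam H + lam z \<le> \<Lambda> then H @ [(x, z, fzp p z x)] else H)"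
  unfolding Hr_def by simp

lemma INV: "p \<in> Ls L \<Longrightarrow> p' \<in> Ls L \<Longrightarrow> take (kap (Hr p n) p) p = take (kap (Hr p n) p) p' \<Longrightarrow> Hr p' n = Hr p n"
proof (induction n arbitrary: p p')
  case 0 then show ?case unfolding Hr_def by simp
next
  case (Suc n)
  have sub: "set (Hr p n) \<subseteq> set (Hr p (Suc n))" unfolding Hr_def by (rule run_set_mono) simp
  have "take (kap (Hr p n) p) p = take (kap (Hr p n) p) p'"
    using take_eq_le[OF Suc.prems(3) kap_mono[OF sub]] .
  then have IH: "Hr p' n = Hr p n" using Suc.IH Suc.prems(1,2) by blast
  obtain x z where xz: "Qw (Hr p n) = (x, z)" by fastforce
  show ?case
  proof (cases "hist_cost lam (Hr p n) + lam z \<le> \<Lambda>")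
    case False
    then show ?thesis using IH xz by (simp add: Hr_Suc)
  next
    case acc: True
    have Hp: "Hr p (Suc n) = Hr p n @ [(x, z, fzp p z x)]" using acc xz by (simp add: Hr_Suc)
    have Hp': "Hr p' (Suc n) = Hr p n @ [(x, z, fzp p' z x)]" using acc xz IH by (simp add: Hr_Suc)
    have "fzp p' z x = fzp p z x"
    proof (cases "ereal (lam z) < cth")
      case True then show ?thesis unfolding fzp_def by simp
    next
      case False
      then have hi: "high (x, z, fzp p z x)" unfolding high_def by simp
      have "(x, z, fzp p z x) \<in> set (Hr p (Suc n))" using Hp by simp
      then have "rv x p \<le> kap (Hr p (Suc n)) p" using kap_ge[OF _ hi] by simp
      then have "take (rv x p) p = take (rv x p) p'" using take_eq_le[OF Suc.prems(3)] by blast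
      then have "RC m 1 (xp p) x = RC m 1 (xp p') x" using K1[OF Suc.prems(1,2)] by blast
      then show ?thesis unfolding fzp_def fp_def by simp
    qed
    then show ?thesis using Hp Hp' by simp
  qed
qed

lemma kapN_stop:
  assumes p: "p \<in> Ls L" and p': "p' \<in> Ls L"
    and tk: "take (kap (Hr p n) p) p = take (kap (Hr p n) p) p'"
  shows "kap (Hr p' n) p' = kap (Hr p n) p"
  using INV[OF p p' tk] kap_stop[OF p p' tk] by simp


definition th :: real where "th = \<rho> / (2 - \<rho>)"

lemma th_pos: "th > 0" unfolding th_def using rho0 rho1 by simp
lemma th_le1: "th \<le> 1" unfolding th_def using rho0 rho1 by simp

definition X :: "nat \<Rightarrow> bool list \<Rightarrow> real" where
  "X n p = \<rho> ^ kap (Hr p n) p / th ^ hq (Hr p n)"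

lemma block:
  assumes p: "p \<in> Ls L" and b: "b \<in> Ls (L - kap (Hr p n) p)"
  shows "take (kap (Hr p n) p) p @ b \<in> Ls L"
    and "Hr (take (kap (Hr p n) p) p @ b) n = Hr p n"
    and "kap (Hr p n) (take (kap (Hr p n) p) p @ b) = kap (Hr p n) p"
proof -
  define k where "k = kap (Hr p n) p"
  have kL: "k \<le> L" unfolding k_def by (rule kap_le)
  have la: "length (take k p) = k" using p kL unfolding Ls_def by simp
  show q: "take (kap (Hr p n) p) p @ b \<in> Ls L" using b la kL unfolding Ls_def k_def[symmetric] by simp
  have tq: "take k p = take k (take k p @ b)" using la by simp
  show H: "Hr (take (kap (Hr p n) p) p @ b) n = Hr p n" using INV[OF p q] tq unfolding k_def by simp
  show "kap (Hr p n) (take (kap (Hr p n) p) p @ b) = kap (Hr p n) p"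
    using kap_stop[OF p q] tq unfolding k_def by simp
qed

lemma POT_step: "(\<Sum>p\<in>Ls L. X n p) \<le> (\<Sum>p\<in>Ls L. X (Suc n) p)"
proof -
  define \<kappa> where "\<kappa> = (\<lambda>p. kap (Hr p n) p)"
  have S: "(\<Sum>p\<in>Ls L. X (Suc n) p) = (\<Sum>p\<in>Ls L. (\<Sum>b\<in>Ls (L - \<kappa> p). X (Suc n) (take (\<kappa> p) p @ b)) / 2 ^ (L - \<kappa> p))"
  proof (rule swap_stop)
    show "\<And>p. p \<in> Ls L \<Longrightarrow> \<kappa> p \<le> L" unfolding \<kappa>_def by (rule kap_le)
    show "\<And>p p'. p \<in> Ls L \<Longrightarrow> p' \<in> Ls L \<Longrightarrow> take (\<kappa> p) p = take (\<kappa> p) p' \<Longrightarrow> \<kappa> p' = \<kappa> p"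
      unfolding \<kappa>_def by (rule kapN_stop)
  qed
  have T: "X n p \<le> (\<Sum>b\<in>Ls (L - \<kappa> p). X (Suc n) (take (\<kappa> p) p @ b)) / 2 ^ (L - \<kappa> p)"
    if p: "p \<in> Ls L" for p
  proof -
    define k where "k = \<kappa> p"
    define a where "a = take k p"
    define H where "H = Hr p n"
    have kL: "k \<le> L" unfolding k_def \<kappa>_def by (rule kap_le)
    have la: "length a = k" using p kL unfolding Ls_def a_def by simp
    have HB: "Hr (a @ b) n = H" "kap H (a @ b) = k" if "b \<in> Ls (L - k)" for b
      using block[OF p, of b n] that unfolding a_def k_def H_def \<kappa>_def by auto
    have kH: "kap H p = k" unfolding H_def k_def \<kappa>_def ..
    obtain x z where xz: "Qw H = (x, z)" by fastforce
    have Xn: "X n p = \<rho> ^ k / th ^ hq H" unfolding X_def H_def[symmetric] kH ..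
    show ?thesis
    proof (cases "hist_cost lam H + lam z \<le> \<Lambda> \<and> \<not> ereal (lam z) < cth")
      case True
      have XS: "X (Suc n) (a @ b) = \<rho> ^ max k (rv x (a @ b)) / th ^ Suc (hq H)" if b: "b \<in> Ls (L - k)" for b
      proof -
        have "Hr (a @ b) (Suc n) = H @ [(x, z, fzp (a @ b) z x)]"
          using True xz HB(1)[OF b] by (simp add: Hr_Suc)
        moreover have "high (x, z, fzp (a @ b) z x)" using True unfolding high_def by (simp add: not_less)
        ultimately show ?thesis unfolding X_def using HB(2)[OF b] by (simp add: kap_snoc hq_snoc)
      qed
      have "(\<Sum>b\<in>Ls (L - k). X (Suc n) (a @ b)) = (\<Sum>b\<in>Ls (L - k). \<rho> ^ max k (rv x (a @ b))) / th ^ Suc (hq H)"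
        using XS by (simp add: sum_divide_distrib)
      also have "\<dots> \<ge> (2 ^ (L - k) * th * \<rho> ^ k) / th ^ Suc (hq H)"
      proof (rule divide_right_mono)
        show "2 ^ (L - k) * th * \<rho> ^ k \<le> (\<Sum>b\<in>Ls (L - k). \<rho> ^ max k (rv x (a @ b)))"
          using TAIL[OF la kL, of x] unfolding th_def .
        show "0 \<le> th ^ Suc (hq H)" using th_pos by simp
      qed
      finally have "(\<Sum>b\<in>Ls (L - k). X (Suc n) (a @ b)) \<ge> 2 ^ (L - k) * (\<rho> ^ k / th ^ hq H)"
        using th_pos by (simp add: field_simps)
      then show ?thesis unfolding Xn k_def[symmetric] a_def[symmetric] by (simp add: field_simps)
    next
      case False
      have XS: "X (Suc n) (a @ b) = \<rho> ^ k / th ^ hq H" if b: "b \<in> Ls (L - k)" for b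
      proof (cases "hist_cost lam H + lam z \<le> \<Lambda>")
        case True
        then have lo: "ereal (lam z) < cth" using False by simp
        have "Hr (a @ b) (Suc n) = H @ [(x, z, fzp (a @ b) z x)]"
          using True xz HB(1)[OF b] by (simp add: Hr_Suc)
        moreover have "\<not> high (x, z, fzp (a @ b) z x)" using lo unfolding high_def by simp
        ultimately show ?thesis unfolding X_def using HB(2)[OF b] by (simp add: kap_snoc hq_snoc)
      next
        case nacc: False
        have "Hr (a @ b) (Suc n) = H" using nacc xz HB(1)[OF b] by (simp add: Hr_Suc)
        then show ?thesis unfolding X_def using HB(2)[OF b] by simp
      qed
      have "(\<Sum>b\<in>Ls (L - k). X (Suc n) (a @ b)) = 2 ^ (L - k) * (\<rho> ^ k / th ^ hq H)"
        using XS card_Ls[of "L - k"] by simp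
      then show ?thesis unfolding Xn k_def[symmetric] a_def[symmetric] by simp
    qed
  qed
  have "(\<Sum>p\<in>Ls L. X n p) \<le> (\<Sum>p\<in>Ls L. (\<Sum>b\<in>Ls (L - \<kappa> p). X (Suc n) (take (\<kappa> p) p @ b)) / 2 ^ (L - \<kappa> p))"
    using T by (rule sum_mono)
  then show ?thesis using S by simp
qed

lemma POT: "(\<Sum>p\<in>Ls L. X n p) \<ge> 2 ^ L"
proof (induction n)
  case 0
  have "X 0 p = 1" for p unfolding X_def Hr_def hq_def by (simp add: kap_Nil)
  then show ?case using card_Ls by simp
next
  case (Suc n) then show ?case using POT_step[of n] by simp
qed


lemma REG:
  assumes p: "p \<in> Ls L"
  shows "- fp p y \<ge> \<nu> * (\<rho> ^ (m + rv y p) - \<rho> ^ (m + L))"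
proof (cases "idx m y = 0")
  case False
  then have m1: "m \<ge> 1" using idx_0 by (cases m) auto
  have "Suc (m - 1) \<notin> RC m 1 (xp p) y"
  proof -
    have "idx m y \<noteq> idx m (xp p)" using False IXP0[OF p, of m] by simp
    moreover have "m \<notin> RT m 1 y" using False unfolding RT_def by simp
    ultimately show ?thesis using m1 unfolding RC_def by simp
  qed
  then have "fp p y \<le> - \<nu> * \<rho> ^ (m - 1)" unfolding fp_def by (rule vl_le) (use nu rho0 rho1 in auto)
  then have f1: "fp p y \<le> - (\<nu> * \<rho> ^ (m - 1))" by simp
  have "\<rho> ^ m \<le> \<rho> ^ (m - 1)" using rho0 rho1 by (intro power_decreasing) auto
  then have f2: "\<nu> * \<rho> ^ m \<le> \<nu> * \<rho> ^ (m - 1)" using nu by (intro mult_left_mono) auto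
  have r0: "rv y p = 0" unfolding rv_def using False by simp
  have f3: "0 \<le> \<nu> * \<rho> ^ (m + L)" using rho0 nu by simp
  have "\<nu> * (\<rho> ^ (m + rv y p) - \<rho> ^ (m + L)) = \<nu> * \<rho> ^ m - \<nu> * \<rho> ^ (m + L)"
    unfolding r0 by (simp add: right_diff_distrib)
  then show ?thesis using f1 f2 f3 by linarith
next
  case True
  show ?thesis
  proof (cases "Suc (ag y p) < L")
    case False
    then have "rv y p = L" unfolding rv_def using True by simp
    then show ?thesis using f_le[of "RC m 1 (xp p) y"] unfolding fp_def by simp
  next
    case aL: True
    define a where "a = ag y p"
    have rv: "rv y p = Suc a" unfolding rv_def a_def using True aL by simp
    have "Suc (m + a) \<notin> RC m 1 (xp p) y"
    proof
      assume "Suc (m + a) \<in> RC m 1 (xp p) y"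
      moreover have "Suc (m + a) \<notin> RT m 1 y" unfolding RT_def by simp
      ultimately have "idx (m + Suc a) y = idx (m + Suc a) (xp p)" unfolding RC_def by simp
      also have "\<dots> = cidx (take (Suc a) p)" using IXP[OF p, of "Suc a"] aL unfolding a_def by simp
      finally have "Suc a \<in> AG y p" using aL unfolding AG_def a_def by simp
      then show False using ag_ge[OF True, of "Suc a" p] unfolding a_def by simp
    qed
    then have "fp p y \<le> - \<nu> * \<rho> ^ (m + a)" unfolding fp_def by (rule vl_le) (use nu rho0 rho1 in auto)
    then have f1: "fp p y \<le> - (\<nu> * \<rho> ^ (m + a))" by simp
    have "\<rho> ^ (m + Suc a) \<le> \<rho> ^ (m + a)" using rho0 rho1 by (intro power_decreasing) auto
    then have f2: "\<nu> * \<rho> ^ (m + Suc a) \<le> \<nu> * \<rho> ^ (m + a)" using nu by (intro mult_left_mono) auto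
    have f3: "0 \<le> \<nu> * \<rho> ^ (m + L)" using rho0 nu by simp
    have "\<nu> * (\<rho> ^ (m + rv y p) - \<rho> ^ (m + L)) = \<nu> * \<rho> ^ (m + Suc a) - \<nu> * \<rho> ^ (m + L)"
      unfolding rv by (simp add: right_diff_distrib)
    then show ?thesis using f1 f2 f3 by linarith
  qed
qed

lemma FINAL:
  assumes hqb: "\<And>p. p \<in> Ls L \<Longrightarrow> hq (Hr p N) \<le> q0"
  shows "(\<Sum>p\<in>Ls L. - fp p (ow (Hr p N))) \<ge> 2 ^ L * (\<nu> * (\<rho> ^ m * th ^ Suc q0 - \<rho> ^ (m + L)))"
proof -
  define \<kappa> where "\<kappa> = (\<lambda>p. kap (Hr p N) p)"
  have A: "(\<Sum>p\<in>Ls L. \<rho> ^ \<kappa> p) \<ge> th ^ q0 * 2 ^ L"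
  proof -
    have "X N p \<le> \<rho> ^ \<kappa> p / th ^ q0" if p: "p \<in> Ls L" for p
    proof -
      have "th ^ q0 \<le> th ^ hq (Hr p N)" using th_pos th_le1 hqb[OF p] by (intro power_decreasing) auto
      then show ?thesis unfolding X_def \<kappa>_def using th_pos rho0
        by (intro divide_left_mono) auto
    qed
    then have "(\<Sum>p\<in>Ls L. X N p) \<le> (\<Sum>p\<in>Ls L. \<rho> ^ \<kappa> p / th ^ q0)" by (rule sum_mono)
    then have "2 ^ L \<le> (\<Sum>p\<in>Ls L. \<rho> ^ \<kappa> p) / th ^ q0" using POT[of N] by (simp add: sum_divide_distrib)
    then show ?thesis using th_pos by (simp add: field_simps)
  qed
  define Y where "Y = (\<lambda>p. \<rho> ^ max (\<kappa> p) (rv (ow (Hr p N)) p))"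
  have B: "(\<Sum>p\<in>Ls L. Y p) \<ge> th * (\<Sum>p\<in>Ls L. \<rho> ^ \<kappa> p)"
  proof -
    have S: "(\<Sum>p\<in>Ls L. Y p) = (\<Sum>p\<in>Ls L. (\<Sum>b\<in>Ls (L - \<kappa> p). Y (take (\<kappa> p) p @ b)) / 2 ^ (L - \<kappa> p))"
    proof (rule swap_stop)
      show "\<And>p. p \<in> Ls L \<Longrightarrow> \<kappa> p \<le> L" unfolding \<kappa>_def by (rule kap_le)
      show "\<And>p p'. p \<in> Ls L \<Longrightarrow> p' \<in> Ls L \<Longrightarrow> take (\<kappa> p) p = take (\<kappa> p) p' \<Longrightarrow> \<kappa> p' = \<kappa> p"
        unfolding \<kappa>_def by (rule kapN_stop)
    qed
    have T: "th * \<rho> ^ \<kappa> p \<le> (\<Sum>b\<in>Ls (L - \<kappa> p). Y (take (\<kappa> p) p @ b)) / 2 ^ (L - \<kappa> p)"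
      if p: "p \<in> Ls L" for p
    proof -
      define k where "k = \<kappa> p"
      define a where "a = take k p"
      have kL: "k \<le> L" unfolding k_def \<kappa>_def by (rule kap_le)
      have la: "length a = k" using p kL unfolding Ls_def a_def by simp
      have YB: "Y (a @ b) = \<rho> ^ max k (rv (ow (Hr p N)) (a @ b))" if "b \<in> Ls (L - k)" for b
        using block[OF p, of b N] that unfolding Y_def a_def k_def \<kappa>_def by auto
      have "(\<Sum>b\<in>Ls (L - k). Y (a @ b)) = (\<Sum>b\<in>Ls (L - k). \<rho> ^ max k (rv (ow (Hr p N)) (a @ b)))"
        using YB by (rule sum.cong[OF refl])
      also have "\<dots> \<ge> 2 ^ (L - k) * th * \<rho> ^ k" using TAIL[OF la kL] unfolding th_def .
      finally have "2 ^ (L - k) * th * \<rho> ^ k \<le> (\<Sum>b\<in>Ls (L - k). Y (a @ b))" .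
      then show ?thesis unfolding a_def k_def by (simp add: field_simps)
    qed
    have "(\<Sum>p\<in>Ls L. th * \<rho> ^ \<kappa> p) \<le> (\<Sum>p\<in>Ls L. Y p)" unfolding S using T by (rule sum_mono)
    then show ?thesis by (simp add: sum_distrib_left)
  qed
  have C: "- fp p (ow (Hr p N)) \<ge> \<nu> * \<rho> ^ m * Y p - \<nu> * \<rho> ^ (m + L)" if p: "p \<in> Ls L" for p
  proof -
    have "\<rho> ^ max (\<kappa> p) (rv (ow (Hr p N)) p) \<le> \<rho> ^ rv (ow (Hr p N)) p"
      using rho0 rho1 by (intro power_decreasing) auto
    then have "\<nu> * \<rho> ^ m * Y p \<le> \<nu> * \<rho> ^ m * \<rho> ^ rv (ow (Hr p N)) p"
      unfolding Y_def using nu rho0 by (intro mult_left_mono) auto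
    also have "\<dots> = \<nu> * \<rho> ^ (m + rv (ow (Hr p N)) p)" by (simp add: power_add)
    finally show ?thesis using REG[OF p, of "ow (Hr p N)"] by (simp add: algebra_simps)
  qed
  have "(\<Sum>p\<in>Ls L. \<nu> * \<rho> ^ m * Y p - \<nu> * \<rho> ^ (m + L)) \<le> (\<Sum>p\<in>Ls L. - fp p (ow (Hr p N)))"
    using C by (rule sum_mono)
  moreover have "(\<Sum>p\<in>Ls L. \<nu> * \<rho> ^ m * Y p - \<nu> * \<rho> ^ (m + L)) = \<nu> * \<rho> ^ m * (\<Sum>p\<in>Ls L. Y p) - 2 ^ L * (\<nu> * \<rho> ^ (m + L))"
    using card_Ls by (simp add: sum_subtractf sum_distrib_left)
  moreover have "\<nu> * \<rho> ^ m * (\<Sum>p\<in>Ls L. Y p) \<ge> \<nu> * \<rho> ^ m * (th * (th ^ q0 * 2 ^ L))"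
  proof -
    have "th * (th ^ q0 * 2 ^ L) \<le> th * (\<Sum>p\<in>Ls L. \<rho> ^ \<kappa> p)" using A th_pos by (intro mult_left_mono) auto
    also have "\<dots> \<le> (\<Sum>p\<in>Ls L. Y p)" using B .
    finally show ?thesis using nu rho0 by (intro mult_left_mono) auto
  qed
  ultimately show ?thesis by (simp add: algebra_simps)
qed

end

context tr
begin

lemma partB_core:
  fixes lam :: "real \<Rightarrow> real" and as :: asm and \<Lambda> :: real and M :: "'w measure"
    and Q :: "'w \<Rightarrow> 'x hist \<Rightarrow> 'x \<times> real" and out :: "'w \<Rightarrow> 'x hist \<Rightarrow> 'x"
  assumes as: "asm_params_ok as" and lam: "bij_betw lam {0..1} {1..}" and M: "prob_space M"
    and Qr: "\<And>w H. snd (Q w H) \<in> {0..1}"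
    and tm: "\<nu> * \<rho> ^ m \<le> t"
    and bud: "ereal \<Lambda> \<le> ereal F * inv_Phibar as t"
  shows "\<exists>f \<in> fun_class K P \<nu> \<rho> d C. \<exists>fz \<in> fid_class as f lam.
           simple_regret M Q out lam \<Lambda> f fz \<ge> ennreal (\<nu> * (\<rho> ^ m * (\<rho> / (2 - \<rho>)) ^ Suc (nat \<lfloor>F\<rfloor>) - \<rho> ^ (m + L)))"
proof -
  define q0 where "q0 = nat \<lfloor>F\<rfloor>"
  define R where "R = \<nu> * (\<rho> ^ m * (\<rho> / (2 - \<rho>)) ^ Suc q0 - \<rho> ^ (m + L))"
  define fpp where "fpp = (\<lambda>p x. vl \<nu> \<rho> (RC m 1 (xp p) x))"
  define g where "g = (\<lambda>x. vl \<nu> \<rho> (RT m 1 x))"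
  define fzq where "fzq = (\<lambda>p z x. if ereal (lam z) < inv_Phibar as t then g x else fpp p x)"
  have xp0: "idx m (xp p) < 1" if "p \<in> Ls L" for p using IXP0[OF that, of m] by simp
  have Ub: "1 \<le> K ^ (m - g) * nat \<lfloor>\<rho> powr (- d * real g)\<rfloor>" for g
  proof -
    have "1 \<le> \<lfloor>\<rho> powr (- d * real g)\<rfloor>" using rpd_ge1[of g] by simp
    then have "1 \<le> nat \<lfloor>\<rho> powr (- d * real g)\<rfloor>" by linarith
    moreover have "1 \<le> K ^ (m - g)" using Kpos by simp
    ultimately show ?thesis by (simp add: one_le_mult_iff)
  qed
  have fcl: "fpp p \<in> fun_class K P \<nu> \<rho> d C" if "p \<in> Ls L" for p
    unfolding fpp_def by (rule class_mem[OF Ub xp0[OF that]])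
  have ffid: "fzq p \<in> fid_class as (fpp p) lam" if "p \<in> Ls L" for p
  proof -
    have "\<bar>fpp p x - g x\<bar> \<le> t" for x
      using vl_diff[OF xp0[OF that], of x] tm unfolding fpp_def g_def by linarith
    then show ?thesis unfolding fzq_def by (rule fid_mem[OF as lam])
  qed
  define G where "G = (\<lambda>p w. ennreal (Sup (range (fpp p)) - fpp p (out w (final_hist lam \<Lambda> (fzq p) (Q w)))))"
  have lam1: "\<And>z. z \<in> {0..1} \<Longrightarrow> lam z \<ge> 1" using lam unfolding bij_betw_def by auto
  have avg: "of_nat (card (Ls L)) * ennreal R \<le> (\<Sum>p\<in>Ls L. G p w)" for w
  proof -
    interpret T: tr2 K P \<nu> \<rho> d C m L lam \<Lambda> "Q w" "inv_Phibar as t" by unfold_locales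
    define N where "N = nat \<lfloor>\<Lambda>\<rfloor> + 1"
    have Hr_eq: "T.Hr p N = final_hist lam \<Lambda> (fzq p) (Q w)" for p
      unfolding T.Hr_def final_hist_def N_def
      by (rule arg_cong[where f="\<lambda>fz. run_hist lam \<Lambda> fz (Q w) (nat \<lfloor>\<Lambda>\<rfloor> + 1)"])
         (simp add: fun_eq_iff T.fzp_def fzq_def T.gT_def g_def T.fp_def fpp_def)
    have hqb: "T.hq (T.Hr p N) \<le> q0" if p: "p \<in> Ls L" for p
    proof -
      define H where "H = T.Hr p N"
      have pos: "\<forall>e \<in> set H. lam (fst (snd e)) \<ge> 1"
      proof
        fix e assume "e \<in> set H"
        then obtain H' where "Q w H' = (fst e, fst (snd e))" using run_entries unfolding H_def T.Hr_def by blast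
        then have "fst (snd e) \<in> {0..1}" using Qr[of w H'] by simp
        then show "lam (fst (snd e)) \<ge> 1" using lam1 by blast
      qed
      have "real (T.hq H) \<le> max 0 F"
        unfolding T.hq_def T.high_def
      proof (rule count_high[OF _ pos bud])
        show "H = [] \<or> hist_cost lam H \<le> \<Lambda>" unfolding H_def T.Hr_def by (rule run_cost)
      qed
      then show ?thesis unfolding q0_def H_def[symmetric]
        by (cases "F < 0") (auto simp: le_nat_floor)
    qed
    have F: "(\<Sum>p\<in>Ls L. - T.fp p (out w (T.Hr p N))) \<ge> 2 ^ L * R"
      using T.FINAL[OF hqb, of "out w"] unfolding R_def T.th_def by simp
    have Gp: "G p w = ennreal (- T.fp p (out w (T.Hr p N)))" for p
    proof -
      have "Sup (range (fpp p)) = 0" unfolding fpp_def by (rule Sup_RC)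
      then show ?thesis unfolding G_def Hr_eq T.fp_def fpp_def by simp
    qed
    have nn: "0 \<le> - T.fp p y" for p y unfolding T.fp_def using f_le by simp
    have "(\<Sum>p\<in>Ls L. G p w) = ennreal (\<Sum>p\<in>Ls L. - T.fp p (out w (T.Hr p N)))"
      unfolding Gp using nn by (simp add: sum_ennreal)
    also have "\<dots> \<ge> ennreal (2 ^ L * R)" using F by (rule ennreal_leI)
    finally have S: "ennreal (2 ^ L * R) \<le> (\<Sum>p\<in>Ls L. G p w)" .
    show ?thesis
    proof (cases "R \<ge> 0")
      case True
      have "of_nat (card (Ls L)) * ennreal R = ennreal (2 ^ L * R)"
        using True card_Ls by (simp add: ennreal_mult ennreal_of_nat_eq_real_of_nat)
      then show ?thesis using S by simp
    next
      case False then show ?thesis by (simp add: ennreal_neg)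
    qed
  qed
  have ex: "\<exists>p\<in>Ls L. ennreal R \<le> outer_nn_integral M (G p)"
    by (rule outer_avg[OF M finite_Ls Ls_ne avg])
  then obtain p where p: "p \<in> Ls L" and pr: "ennreal R \<le> outer_nn_integral M (G p)" by blast
  have "simple_regret M Q out lam \<Lambda> (fpp p) (fzq p) = outer_nn_integral M (G p)"
    unfolding simple_regret_def G_def ..
  then have "simple_regret M Q out lam \<Lambda> (fpp p) (fzq p) \<ge> ennreal R" using pr by simp
  then show ?thesis using fcl[OF p] ffid[OF p] unfolding R_def q0_def by blast
qed

end

context hpc
begin

lemma th_ge: "\<rho> / (2 - \<rho>) \<ge> \<rho> ^ 3"
proof -
  have "\<rho> ^ 2 * (2 - \<rho>) \<le> 1"
  proof -
    have "1 - \<rho> ^ 2 * (2 - \<rho>) = (1 - \<rho>) * (1 + \<rho> - \<rho> ^ 2)" by (simp add: algebra_simps power2_eq_square power3_eq_cube)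
    moreover have "1 + \<rho> - \<rho> ^ 2 > 0" using rho0 rho1 by (simp add: power2_eq_square) (smt (verit) mult_less_cancel_left1)
    ultimately have "1 - \<rho> ^ 2 * (2 - \<rho>) \<ge> 0" using rho1 by simp
    then show ?thesis by simp
  qed
  then have "\<rho> * (\<rho> ^ 2 * (2 - \<rho>)) \<le> \<rho> * 1" using rho0 by (intro mult_left_mono) auto
  then have "\<rho> ^ 3 * (2 - \<rho>) \<le> \<rho>" by (simp add: power3_eq_cube power2_eq_square mult_ac)
  then show ?thesis using rho1 by (simp add: pos_le_divide_eq)
qed

definition Hf :: "real \<Rightarrow> real" where "Hf r = ln (\<nu> / (4 * r)) / (4 * ln (1 / \<rho>))"

lemma powr_Hf: assumes r: "r > 0" shows "(4 * r / \<nu>) powr (1 / 4) = \<rho> powr Hf r"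
proof -
  have "\<rho> powr Hf r = exp (Hf r * ln \<rho>)" using rho0 by (simp add: powr_def)
  also have "Hf r * ln \<rho> = - ln (\<nu> / (4 * r)) / 4"
    unfolding Hf_def using lnr rho0 by (simp add: ln_div field_simps)
  also have "- ln (\<nu> / (4 * r)) = ln (4 * r / \<nu>)" using r nu by (simp add: ln_div)
  also have "exp (ln (4 * r / \<nu>) / 4) = (4 * r / \<nu>) powr (1 / 4)"
    using r nu by (simp add: powr_def)
  finally show ?thesis by simp
qed

lemma r_Hf: assumes r: "r > 0" shows "r = \<nu> / 4 * \<rho> powr (4 * Hf r)"
proof -
  have "\<rho> powr (4 * Hf r) = (\<rho> powr Hf r) powr 4" using rho0 by (simp add: powr_powr mult.commute)
  also have "\<dots> = ((4 * r / \<nu>) powr (1 / 4)) powr 4" using powr_Hf[OF r] by simp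
  also have "\<dots> = 4 * r / \<nu>" using r nu by (simp add: powr_powr)
  finally show ?thesis using nu by simp
qed

lemma Hf_ge: assumes r: "r > 0" and rb: "r \<le> \<nu> * \<rho> ^ 6 / 4" shows "Hf r \<ge> 3 / 2"
proof -
  have "(1 / \<rho>) ^ 6 \<le> \<nu> / (4 * r)"
    using r rb nu rho0 by (simp add: field_simps power_divide)
  then have "ln ((1 / \<rho>) ^ 6) \<le> ln (\<nu> / (4 * r))" using rho0 r nu by (subst ln_le_cancel_iff) auto
  then have "6 * ln (1 / \<rho>) \<le> ln (\<nu> / (4 * r))" by (simp add: ln_realpow)
  then show ?thesis unfolding Hf_def using lnr by (simp add: field_simps)
qed


lemma partB:
  fixes lam :: "real \<Rightarrow> real" and as :: asm and \<Lambda> :: real and M :: "'w measure"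
    and Q :: "'w \<Rightarrow> 'x hist \<Rightarrow> 'x \<times> real" and out :: "'w \<Rightarrow> 'x hist \<Rightarrow> 'x"
  assumes as: "asm_params_ok as" and lam: "bij_betw lam {0..1} {1..}" and M: "prob_space M"
    and Qr: "\<And>w H. snd (Q w H) \<in> {0..1}"
  shows "\<exists>f \<in> fun_class K P \<nu> \<rho> d C. \<exists>fz \<in> fid_class as f lam.
        simple_regret M Q out lam \<Lambda> f fz \<ge>
          (SUP r \<in> {r. 0 < r \<and> r \<le> \<nu> * \<rho> ^ 6 / 4 \<and>
                      ereal \<Lambda> \<le> ereal (ln (\<nu> / (4 * r)) / (4 * ln (1 / \<rho>)) - 2)
                                   * inv_Phibar as (\<nu> / \<rho> * (4 * r / \<nu>) powr (1 / 4))}. ennreal r)"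
proof -
  define Sb where "Sb = {r. 0 < r \<and> r \<le> \<nu> * \<rho> ^ 6 / 4 \<and>
                      ereal \<Lambda> \<le> ereal (ln (\<nu> / (4 * r)) / (4 * ln (1 / \<rho>)) - 2)
                                   * inv_Phibar as (\<nu> / \<rho> * (4 * r / \<nu>) powr (1 / 4))}"
  have "\<exists>f \<in> fun_class K P \<nu> \<rho> d C. \<exists>fz \<in> fid_class as f lam.
        simple_regret M Q out lam \<Lambda> f fz \<ge> (SUP r \<in> Sb. ennreal r)"
  proof (cases "Sb = {}")
    case True
    then show ?thesis using exists_triv[OF as lam] by simp
  next
    case False
    define mf where "mf = (\<lambda>r. nat \<lceil>Hf r - 1\<rceil>)"
    define qf where "qf = (\<lambda>r. nat \<lfloor>Hf r - 2\<rfloor>)"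
    define cf where "cf = (\<lambda>r. mf r + 3 * qf r)"
    have ex: "\<exists>c. \<exists>r \<in> Sb. cf r = c" using False by blast
    define J where "J = (LEAST c. \<exists>r \<in> Sb. cf r = c)"
    have "\<exists>r \<in> Sb. cf r = J" unfolding J_def using ex by (rule LeastI_ex)
    then obtain r1 where r1: "r1 \<in> Sb" "cf r1 = J" by blast
    have Jle: "J \<le> cf r" if "r \<in> Sb" for r unfolding J_def using that by (intro Least_le) blast
    have r1pos: "r1 > 0" and r1b: "r1 \<le> \<nu> * \<rho> ^ 6 / 4" using r1(1) unfolding Sb_def by auto
    have bud: "ereal \<Lambda> \<le> ereal (Hf r1 - 2) * inv_Phibar as (\<nu> / \<rho> * (4 * r1 / \<nu>) powr (1 / 4))"
      using r1(1) unfolding Sb_def Hf_def by auto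
    define m where "m = mf r1"
    define q where "q = qf r1"
    define th where "th = \<rho> / (2 - \<rho>)"
    have th0: "th > 0" unfolding th_def using rho0 rho1 by simp
    have "th ^ Suc q / 2 > 0" using th0 by simp
    then obtain L where L: "\<rho> ^ L < th ^ Suc q / 2" using real_arch_pow_inv rho1 by blast
    interpret T: tr K P \<nu> \<rho> d C m L by unfold_locales
    have H1: "Hf r1 \<ge> 3 / 2" by (rule Hf_ge[OF r1pos r1b])
    have tm: "\<nu> * \<rho> ^ m \<le> \<nu> / \<rho> * (4 * r1 / \<nu>) powr (1 / 4)"
    proof -
      have "real m \<ge> Hf r1 - 1" unfolding m_def mf_def by linarith
      then have "\<rho> powr real m \<le> \<rho> powr (Hf r1 - 1)" using rho0 rho1 by (intro powr_mono') auto
      then have "\<rho> ^ m \<le> \<rho> powr (Hf r1 - 1)" using rho0 by (simp add: powr_realpow)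
      also have "\<rho> powr (Hf r1 - 1) = \<rho> powr Hf r1 / \<rho>" using rho0 by (simp add: powr_diff)
      finally have "\<nu> * \<rho> ^ m \<le> \<nu> * (\<rho> powr Hf r1 / \<rho>)" using nu by (intro mult_left_mono) auto
      then show ?thesis using powr_Hf[OF r1pos] by simp
    qed
    have qeq: "nat \<lfloor>Hf r1 - 2\<rfloor> = q" unfolding q_def qf_def ..
    have core: "\<exists>f \<in> fun_class K P \<nu> \<rho> d C. \<exists>fz \<in> fid_class as f lam.
           simple_regret M Q out lam \<Lambda> f fz \<ge> ennreal (\<nu> * (\<rho> ^ m * th ^ Suc q - \<rho> ^ (m + L)))"
      using T.partB_core[OF as lam M Qr tm bud, where out=out] unfolding qeq th_def .
    have val: "\<nu> * (\<rho> ^ m * th ^ Suc q - \<rho> ^ (m + L)) \<ge> \<nu> / 2 * \<rho> ^ (J + 3)"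
    proof -
      have "\<rho> ^ (m + L) = \<rho> ^ m * \<rho> ^ L" by (simp add: power_add)
      also have "\<dots> \<le> \<rho> ^ m * (th ^ Suc q / 2)" using L rho0 by (intro mult_left_mono) auto
      finally have a: "\<rho> ^ m * th ^ Suc q - \<rho> ^ (m + L) \<ge> \<rho> ^ m * th ^ Suc q / 2" by (simp add: mult_ac)
      have "th ^ Suc q \<ge> (\<rho> ^ 3) ^ Suc q" unfolding th_def using th_ge rho0 by (intro power_mono) auto
      then have "\<rho> ^ m * th ^ Suc q \<ge> \<rho> ^ m * (\<rho> ^ 3) ^ Suc q" using rho0 by (intro mult_left_mono) auto
      moreover have "\<rho> ^ m * (\<rho> ^ 3) ^ Suc q = \<rho> ^ (J + 3)"
      proof -
        have "J + 3 = m + 3 * Suc q" using r1(2) unfolding cf_def m_def q_def by simp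
        then show ?thesis by (simp only: power_add power_mult)
      qed
      ultimately have "\<rho> ^ m * th ^ Suc q \<ge> \<rho> ^ (J + 3)" by simp
      then have "\<rho> ^ m * th ^ Suc q / 2 \<ge> \<rho> ^ (J + 3) / 2" by simp
      with a have "\<rho> ^ m * th ^ Suc q - \<rho> ^ (m + L) \<ge> \<rho> ^ (J + 3) / 2" by linarith
      then show ?thesis using nu by (simp add: mult_left_mono)
    qed
    have bound: "r \<le> \<nu> / 2 * \<rho> ^ (J + 3)" if r: "r \<in> Sb" for r
    proof -
      have rpos: "r > 0" and rb: "r \<le> \<nu> * \<rho> ^ 6 / 4" using r unfolding Sb_def by auto
      define H where "H = Hf r"
      have H15: "H \<ge> 3 / 2" unfolding H_def by (rule Hf_ge[OF rpos rb])
      have m': "real (mf r) < H" unfolding mf_def H_def[symmetric] using H15 by linarith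
      have "real (mf r + 3 * qf r + 3) \<le> 4 * H"
      proof (cases "H \<ge> 2")
        case True
        have "real (qf r) \<le> H - 2" unfolding qf_def H_def[symmetric] using True by linarith
        then show ?thesis using m' by simp
      next
        case False
        then have "qf r = 0" unfolding qf_def H_def[symmetric] by simp
        then show ?thesis using m' H15 by simp
      qed
      then have "real (J + 3) \<le> 4 * H" using Jle[OF r] unfolding cf_def by linarith
      then have "\<rho> powr (4 * H) \<le> \<rho> powr real (J + 3)" using rho0 rho1 by (intro powr_mono') auto
      moreover have "\<rho> powr real (J + 3) = \<rho> ^ (J + 3)" using rho0 by (rule powr_realpow)
      ultimately have "\<rho> powr (4 * H) \<le> \<rho> ^ (J + 3)" by simp
      moreover have "r = \<nu> / 4 * \<rho> powr (4 * H)" unfolding H_def by (rule r_Hf[OF rpos])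
      ultimately have "r \<le> \<nu> / 4 * \<rho> ^ (J + 3)" using nu by (simp add: mult_left_mono)
      also have "\<dots> \<le> \<nu> / 2 * \<rho> ^ (J + 3)" using nu rho0 by (intro mult_right_mono) auto
      finally show ?thesis .
    qed
    have "(SUP r \<in> Sb. ennreal r) \<le> ennreal (\<nu> / 2 * \<rho> ^ (J + 3))"
      by (rule SUP_least) (use bound in \<open>simp add: ennreal_leI\<close>)
    also have "\<dots> \<le> ennreal (\<nu> * (\<rho> ^ m * th ^ Suc q - \<rho> ^ (m + L)))" using val by (rule ennreal_leI)
    finally show ?thesis using core by (meson order_trans)
  qed
  then show ?thesis unfolding Sb_def .
qed

end

theorem lemma6:
  fixes K :: nat and P :: "nat \<Rightarrow> nat \<Rightarrow> 'x set"
    and \<nu> \<rho> d C :: real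
    and as :: asm and lam :: "real \<Rightarrow> real"
    and M :: "'w measure" and Q :: "'w \<Rightarrow> 'x hist \<Rightarrow> 'x \<times> real" and out :: "'w \<Rightarrow> 'x hist \<Rightarrow> 'x"
    and \<Lambda> :: real
  assumes K: "K \<ge> 2"
    and part: "hier_partition K P"
    and \<nu>: "\<nu> > 0"
    and \<rho>: "0 < \<rho>" "\<rho> < 1"
    and d: "0 \<le> d" "d \<le> ln (real K) / ln (1 / \<rho>)"
    and C: "C \<ge> (real K * \<rho> powr d) ^ nat \<lfloor>ln 3 / ln (1 / \<rho>)\<rfloor>" "C > 1"
    and as: "asm_params_ok as"
    and lam: "bij_betw lam {0..1} {1..}"
    and M: "prob_space M"
    and Q: "\<And>w H. snd (Q w H) \<in> {0..1}"
  shows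
    "(\<exists>f \<in> fun_class K P \<nu> \<rho> d C. \<exists>fz \<in> fid_class as f lam.
        simple_regret M Q out lam \<Lambda> f fz \<ge>
          (SUP r \<in> {r. 0 < r \<and> r \<le> \<nu> * \<rho> / 2 \<and>
                      ereal \<Lambda> \<le> ereal (1 / real K * (2 * r / (\<nu> * \<rho>)) powr (- d))
                                   * inv_Phibar as (2 * r / \<rho>)}. ennreal r))
     \<and>
     (\<exists>f \<in> fun_class K P \<nu> \<rho> d C. \<exists>fz \<in> fid_class as f lam.
        simple_regret M Q out lam \<Lambda> f fz \<ge>
          (SUP r \<in> {r. 0 < r \<and> r \<le> \<nu> * \<rho> ^ 6 / 4 \<and>
                      ereal \<Lambda> \<le> ereal (ln (\<nu> / (4 * r)) / (4 * ln (1 / \<rho>)) - 2)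
                                   * inv_Phibar as (\<nu> / \<rho> * (4 * r / \<nu>) powr (1 / 4))}. ennreal r))"
  proof -
  interpret H: hpc K P \<nu> \<rho> d C
    by unfold_locales (use K part \<nu> \<rho> d C in auto)
  show ?thesis
  proof (rule conjI)
    show "\<exists>f \<in> fun_class K P \<nu> \<rho> d C. \<exists>fz \<in> fid_class as f lam.
        simple_regret M Q out lam \<Lambda> f fz \<ge>
          (SUP r \<in> {r. 0 < r \<and> r \<le> \<nu> * \<rho> / 2 \<and>
                      ereal \<Lambda> \<le> ereal (1 / real K * (2 * r / (\<nu> * \<rho>)) powr (- d))
                                   * inv_Phibar as (2 * r / \<rho>)}. ennreal r)"
      by (rule H.partA[OF as lam M]) (rule Q)
    show "\<exists>f \<in> fun_class K P \<nu> \<rho> d C. \<exists>fz \<in> fid_class as f lam.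
        simple_regret M Q out lam \<Lambda> f fz \<ge>
          (SUP r \<in> {r. 0 < r \<and> r \<le> \<nu> * \<rho> ^ 6 / 4 \<and>
                      ereal \<Lambda> \<le> ereal (ln (\<nu> / (4 * r)) / (4 * ln (1 / \<rho>)) - 2)
                                   * inv_Phibar as (\<nu> / \<rho> * (4 * r / \<nu>) powr (1 / 4))}. ennreal r)"
      by (rule H.partB[OF as lam M]) (rule Q)
  qed
qed

end
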